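(* Assume the setting of the aggregated-control regret theorem, but replace the gradient-growth bound on the costs by: there is $\bar L>0$ such that for all $i$, $t$ and all $(x,u),(\tilde x,\tilde u)$, $|c_t^i(x,u)-c_t^i(\tilde x,\tilde u)|\le\bar L(\|x-\tilde x\|+\|u-\tilde u\|)$ (costs still convex, $\|w_t\|\le W$, global strong stability). Then there exist constants $c_0,C>0$ depending only polynomially on $W,\bar\gamma^{-1},\bar\kappa,\max_j\|B_j\|,\bar L,d$, and an absolute constant $c\ge0$, such that if agent $i$ runs the aggregated-control gradient perturbation controller with $\eta=c_0/\sqrt T$ and $H=\lceil\log(2\bar\kappa N\sqrt T)/\bar\gamma\rceil$ and every other agent $j$ plays a DAC policy with parameters $M_{j,t}\in\mathcal M_j$, then for all $T\ge H+1$, $$\mathrm{Reg}_i^{H+1:T}\le C\sqrt T\,(1+\log(NT))^{c}.$$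
   Context: Linear dynamical system with $N$ agents: $x_{t+1}=Ax_t+\sum_{j=1}^N B_ju_t^j+w_t$, $t\ge0$, $x_0=0$; $w_s=0$ for $s<0$; agent $j$ incurs $c_t^j(x_t,u_t^j)$. $(\kappa,\gamma)$-strong stability of $K$ for $(A,B)$: $\|K\|\le\kappa$ and $A-BK=QLQ^{-1}$ with $\|L\|\le1-\gamma$, $\|Q\|\|Q^{-1}\|\le\kappa$. Global strong stability: each agent $j$ knows $K_j$ such that $K=(K_1;\dots;K_N)$ is $(\bar\kappa,\bar\gamma)$-strongly stable for $(A,[B_1,\dots,B_N])$, $\bar\kappa\ge1$; $\bar A_K=A-\sum_jB_jK_j$. $\mathcal M_j=\{M_j=(M_j^{[0]},\dots,M_j^{[H-1]}):\|M_j^{[p-1]}\|\le2\bar\kappa^2(1-\bar\gamma)^p,\ p=1,\dots,H\}$. Transfer matrix $\bar\Psi^h_{t,l}(M_{t-h:t})=\bar A_K^l\mathbf 1_{l\le h}+\sum_{k=0}^h\bar A_K^k\sum_jB_jM_{j,t-k}^{[l-k-1]}\mathbf 1_{1\le l-k\le H}$; ideal state $y_t=\sum_{l=0}^{2H}\bar\Psi^H_{t-1,l}(M_{t-1-H:t-1})w_{t-1-l}$; ideal action $v_t^i=-K_iy_t+\sum_{p=1}^HM_{i,t}^{[p-1]}w_{t-p}$. The aggregated-control algorithm of agent $i$ computes $w_{t-1}=x_t-Ax_{t-1}-\sum_jB_ju_{t-1}^j$ from $x_t$ and the observed $\sum_{j\ne i}B_ju_t^j$, plays $u_t^i=-K_ix_t+\sum_{p=1}^HM_{i,t}^{[p-1]}w_{t-p}$,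 and updates $M_{i,t+1}=\Pi_{\mathcal M_i}[M_{i,t}-\eta\nabla\ell_t^i(M_{i,t})]$ with $\ell_t^i(M)=c_t^i(y_t,v_t^i)$ evaluated with agent $i$'s parameter equal to $M$ at times $t-1-H,\dots,t$ and other agents' parameters equal to their actual ones. $\mathrm{Reg}_i^{H+1:T}=\max_{\|w_t\|\le W}\big(\sum_{t=H+1}^Tc_t^i(x_t,u_t^i)-\min_{M_*\in\mathcal M_i}\sum_{t=H+1}^Tc_t^i(x_t^{M_*},u_t^{i,M_*})\big)$, the counterfactual trajectory having agent $i$ play the DAC policy with constant $M_*$ and each other agent $j$ the DAC policy with its parameters $M_{j,t}$, from $x_0=0$ with the same disturbances. *)

theory Defs
  imports Complex_Main "HOL-Library.Function_Algebras"
begin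

text \<open>A vector of dimension r is a function nat => real of which only the
  coordinates 0..r-1 are used; a matrix with r rows and c columns is a
  function nat => nat => real of which only the entries (a,b), a<r, b<c,
  are used.  Every operation below truncates to the relevant indices.\<close>

type_synonym vec = "nat \<Rightarrow> real"
type_synonym mat = "nat \<Rightarrow> nat \<Rightarrow> real"

definition vnorm :: "nat \<Rightarrow> vec \<Rightarrow> real" where
  "vnorm r x = sqrt (\<Sum>a<r. (x a)^2)"

definition mv :: "nat \<Rightarrow> mat \<Rightarrow> vec \<Rightarrow> vec" where
  "mv c X x = (\<lambda>a. \<Sum>b<c. X a b * x b)"

definition mm :: "nat \<Rightarrow> mat \<Rightarrow> mat \<Rightarrow> mat" where
  "mm c X Y = (\<lambda>a b. \<Sum>l<c. X a l * Y l b)"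

definition opnorm :: "nat \<Rightarrow> nat \<Rightarrow> mat \<Rightarrow> real" where
  "opnorm r c X = Sup {vnorm r (mv c X x) | x. vnorm c x \<le> 1}"

text \<open>Operator norm of the stacked matrix K = (K_1; ...; K_N), K_j of size m_j x n.\<close>
definition stack_opnorm :: "nat \<Rightarrow> (nat \<Rightarrow> nat) \<Rightarrow> nat \<Rightarrow> (nat \<Rightarrow> mat) \<Rightarrow> real" where
  "stack_opnorm n m N K =
     Sup {sqrt (\<Sum>j<N. (vnorm (m j) (mv n (K j) x))^2) | x. vnorm n x \<le> 1}"

definition AK :: "(nat \<Rightarrow> nat) \<Rightarrow> nat \<Rightarrow> mat \<Rightarrow> (nat \<Rightarrow> mat) \<Rightarrow> (nat \<Rightarrow> mat) \<Rightarrow> mat" where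
  "AK m N A B K = (\<lambda>a b. A a b - (\<Sum>j<N. \<Sum>l<m j. B j a l * K j l b))"

definition glob_strongly_stable ::
  "nat \<Rightarrow> (nat \<Rightarrow> nat) \<Rightarrow> nat \<Rightarrow> mat \<Rightarrow> (nat \<Rightarrow> mat) \<Rightarrow> (nat \<Rightarrow> mat) \<Rightarrow> real \<Rightarrow> real \<Rightarrow> bool" where
  "glob_strongly_stable n m N A B K \<kappa> \<gamma> \<longleftrightarrow>
     stack_opnorm n m N K \<le> \<kappa> \<and>
     (\<exists>Q Qi L. (\<forall>a<n. \<forall>b<n. mm n Q Qi a b = (if a = b then 1 else 0)
                          \<and> mm n Qi Q a b = (if a = b then 1 else 0))
        \<and> (\<forall>a<n. \<forall>b<n. AK m N A B K a b = mm n (mm n Q L) Qi a b)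
        \<and> opnorm n n L \<le> 1 - \<gamma>
        \<and> opnorm n n Q * opnorm n n Qi \<le> \<kappa>)"

definition wp :: "(nat \<Rightarrow> vec) \<Rightarrow> nat \<Rightarrow> nat \<Rightarrow> vec" where
  "wp w t p = (if p \<le> t then w (t - p) else 0)"

text \<open>DAC parameter set  M_j  (M^{[p-1]} are m_j x n matrices, p = 1..H).\<close>
definition calM :: "nat \<Rightarrow> nat \<Rightarrow> nat \<Rightarrow> real \<Rightarrow> real \<Rightarrow> (nat \<Rightarrow> mat) set" where
  "calM n mj H \<kappa> \<gamma> =
     {M. \<forall>p\<in>{1..H}. opnorm mj n (M (p - 1)) \<le> 2 * \<kappa>^2 * (1 - \<gamma>)^p}"

definition dac_act :: "nat \<Rightarrow> nat \<Rightarrow> mat \<Rightarrow> (nat \<Rightarrow> mat) \<Rightarrow> (nat \<Rightarrow> vec) \<Rightarrow> nat \<Rightarrow> vec \<Rightarrow> vec" where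
  "dac_act n H Kj Mj w t x = - mv n Kj x + (\<Sum>p\<in>{1..H}. mv n (Mj (p - 1)) (wp w t p))"

primrec traj :: "nat \<Rightarrow> (nat \<Rightarrow> nat) \<Rightarrow> nat \<Rightarrow> mat \<Rightarrow> (nat \<Rightarrow> mat) \<Rightarrow> (nat \<Rightarrow> mat) \<Rightarrow> nat
    \<Rightarrow> (nat \<Rightarrow> nat \<Rightarrow> nat \<Rightarrow> mat) \<Rightarrow> (nat \<Rightarrow> vec) \<Rightarrow> nat \<Rightarrow> vec" where
  "traj n m N A B K H P w 0 = 0"
| "traj n m N A B K H P w (Suc t) =
     mv n A (traj n m N A B K H P w t)
     + (\<Sum>j<N. mv (m j) (B j) (dac_act n H (K j) (P j t) w t (traj n m N A B K H P w t)))
     + w t"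

text \<open>Ideal state  y_t = sum_{l=0}^{2H} Psi^H_{t-1,l}(M_{t-1-H:t-1}) w_{t-1-l}.
  (Parameters at negative times only ever multiply w_s with s < 0, i.e. zero.)\<close>
definition ideal_state :: "nat \<Rightarrow> (nat \<Rightarrow> nat) \<Rightarrow> nat \<Rightarrow> mat \<Rightarrow> (nat \<Rightarrow> mat) \<Rightarrow> (nat \<Rightarrow> mat) \<Rightarrow> nat
    \<Rightarrow> (nat \<Rightarrow> nat \<Rightarrow> nat \<Rightarrow> mat) \<Rightarrow> (nat \<Rightarrow> vec) \<Rightarrow> nat \<Rightarrow> vec" where
  "ideal_state n m N A B K H P w t =
     (\<Sum>l\<in>{0..2*H}.
        (if l \<le> H then (mv n (AK m N A B K) ^^ l) (wp w t (Suc l)) else 0)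
      + (\<Sum>k\<in>{0..H}.
           if k < l \<and> l - k \<le> H then
             (mv n (AK m N A B K) ^^ k)
               (\<Sum>j<N. mv (m j) (B j) (mv n (P j (t - 1 - k) (l - k - 1)) (wp w t (Suc l))))
           else 0))"

definition ideal_loss :: "nat \<Rightarrow> (nat \<Rightarrow> nat) \<Rightarrow> nat \<Rightarrow> mat \<Rightarrow> (nat \<Rightarrow> mat) \<Rightarrow> (nat \<Rightarrow> mat) \<Rightarrow> nat
    \<Rightarrow> (nat \<Rightarrow> nat \<Rightarrow> nat \<Rightarrow> mat) \<Rightarrow> (nat \<Rightarrow> vec) \<Rightarrow> nat \<Rightarrow> (nat \<Rightarrow> vec \<Rightarrow> vec \<Rightarrow> real)
    \<Rightarrow> nat \<Rightarrow> (nat \<Rightarrow> mat) \<Rightarrow> real" where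
  "ideal_loss n m N A B K H P w i c t M =
     (let y = ideal_state n m N A B K H (P(i := (\<lambda>_. M))) w t
      in c t y (dac_act n H (K i) M w t y))"

definition frob :: "nat \<Rightarrow> nat \<Rightarrow> nat \<Rightarrow> (nat \<Rightarrow> mat) \<Rightarrow> (nat \<Rightarrow> mat) \<Rightarrow> real" where
  "frob H r c X Y = (\<Sum>p<H. \<Sum>a<r. \<Sum>b<c. X p a b * Y p a b)"

definition is_proj :: "nat \<Rightarrow> nat \<Rightarrow> nat \<Rightarrow> (nat \<Rightarrow> mat) set \<Rightarrow> (nat \<Rightarrow> mat) \<Rightarrow> (nat \<Rightarrow> mat) \<Rightarrow> bool" where
  "is_proj H r c S Z X \<longleftrightarrow> X \<in> S \<and>
     (\<forall>Y\<in>S. frob H r c (X - Z) (X - Z) \<le> frob H r c (Y - Z) (Y - Z))"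

definition subgrad :: "nat \<Rightarrow> nat \<Rightarrow> nat \<Rightarrow> ((nat \<Rightarrow> mat) \<Rightarrow> real) \<Rightarrow> (nat \<Rightarrow> mat) \<Rightarrow> (nat \<Rightarrow> mat) \<Rightarrow> bool" where
  "subgrad H r c f X g \<longleftrightarrow> (\<forall>Y. f Y \<ge> f X + frob H r c g (Y - X))"

definition agc_run :: "nat \<Rightarrow> (nat \<Rightarrow> nat) \<Rightarrow> nat \<Rightarrow> mat \<Rightarrow> (nat \<Rightarrow> mat) \<Rightarrow> (nat \<Rightarrow> mat) \<Rightarrow> nat
    \<Rightarrow> real \<Rightarrow> real \<Rightarrow> real \<Rightarrow> nat \<Rightarrow> (nat \<Rightarrow> vec \<Rightarrow> vec \<Rightarrow> real) \<Rightarrow> (nat \<Rightarrow> vec)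
    \<Rightarrow> (nat \<Rightarrow> nat \<Rightarrow> nat \<Rightarrow> mat) \<Rightarrow> bool" where
  "agc_run n m N A B K H \<kappa> \<gamma> \<eta> i c w P \<longleftrightarrow>
     P i 0 \<in> calM n (m i) H \<kappa> \<gamma> \<and>
     (\<forall>t. \<exists>g. subgrad H (m i) n (ideal_loss n m N A B K H P w i c t) (P i t) g
             \<and> is_proj H (m i) n (calM n (m i) H \<kappa> \<gamma>) (P i t - (\<lambda>p a b. \<eta> * g p a b)) (P i (Suc t)))"

definition convex_cost :: "(vec \<Rightarrow> vec \<Rightarrow> real) \<Rightarrow> bool" where
  "convex_cost f \<longleftrightarrow> (\<forall>x x' u u' \<theta>. 0 \<le> \<theta> \<and> \<theta> \<le> 1 \<longrightarrow>
      f (\<lambda>a. \<theta> * x a + (1 - \<theta>) * x' a) (\<lambda>a. \<theta> * u a + (1 - \<theta>) * u' a)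
        \<le> \<theta> * f x u + (1 - \<theta>) * f x' u')"

definition lipschitz_cost :: "nat \<Rightarrow> nat \<Rightarrow> real \<Rightarrow> (vec \<Rightarrow> vec \<Rightarrow> real) \<Rightarrow> bool" where
  "lipschitz_cost n mi L f \<longleftrightarrow> (\<forall>x u x' u'.
      \<bar>f x u - f x' u'\<bar> \<le> L * (vnorm n (x - x') + vnorm mi (u - u')))"

definition Hpar :: "real \<Rightarrow> real \<Rightarrow> nat \<Rightarrow> nat \<Rightarrow> nat" where
  "Hpar \<kappa> \<gamma> N T = nat \<lceil>ln (2 * \<kappa> * real N * sqrt (real T)) / \<gamma>\<rceil>"

definition regret_vs :: "nat \<Rightarrow> (nat \<Rightarrow> nat) \<Rightarrow> nat \<Rightarrow> mat \<Rightarrow> (nat \<Rightarrow> mat) \<Rightarrow> (nat \<Rightarrow> mat) \<Rightarrow> nat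
    \<Rightarrow> (nat \<Rightarrow> nat \<Rightarrow> nat \<Rightarrow> mat) \<Rightarrow> (nat \<Rightarrow> vec) \<Rightarrow> nat \<Rightarrow> (nat \<Rightarrow> vec \<Rightarrow> vec \<Rightarrow> real)
    \<Rightarrow> nat \<Rightarrow> (nat \<Rightarrow> mat) \<Rightarrow> real" where
  "regret_vs n m N A B K H P w i c T Ms =
     (\<Sum>t\<in>{H+1..T}. c t (traj n m N A B K H P w t)
                         (dac_act n H (K i) (P i t) w t (traj n m N A B K H P w t)))
   - (\<Sum>t\<in>{H+1..T}. c t (traj n m N A B K H (P(i := (\<lambda>_. Ms))) w t)
                         (dac_act n H (K i) Ms w t (traj n m N A B K H (P(i := (\<lambda>_. Ms))) w t)))"

end

theory Submission
  imports Defs "HOL-Analysis.L2_Norm"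
begin


lemma vnorm_L2: "vnorm r x = L2_set x {..<r}"
  by (simp add: vnorm_def L2_set_def)

lemma vnorm_nonneg[simp]: "0 \<le> vnorm r x"
  by (simp add: vnorm_L2)

lemma vnorm_add: "vnorm r (x + y) \<le> vnorm r x + vnorm r y"
  using L2_set_triangle_ineq[of x y "{..<r}"] by (simp add: vnorm_L2 plus_fun_def)

lemma vnorm_uminus[simp]: "vnorm r (- x) = vnorm r x"
  by (simp add: vnorm_def)

lemma vnorm_zero[simp]: "vnorm r 0 = 0"
  by (simp add: vnorm_def)

lemma vnorm_zero'[simp]: "vnorm r (\<lambda>a. 0) = 0"
  by (simp add: vnorm_def)

lemma vnorm_diff_sym: "vnorm r (x - y) = vnorm r (y - x)"
  by (metis minus_diff_eq vnorm_uminus)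

lemma vnorm_diff: "vnorm r (x - y) \<le> vnorm r x + vnorm r y"
  using vnorm_add[of r x "- y"] by simp

lemma vnorm_triangle: "vnorm r (x - z) \<le> vnorm r (x - y) + vnorm r (y - z)"
  using vnorm_add[of r "x - y" "y - z"] by simp

lemma vnorm_sum: "vnorm r (\<Sum>j\<in>S. f j) \<le> (\<Sum>j\<in>S. vnorm r (f j))"
proof (induction S rule: infinite_finite_induct)
  case (insert a F)
  have "vnorm r (sum f (insert a F)) \<le> vnorm r (f a) + vnorm r (sum f F)"
    unfolding sum.insert[OF insert(1,2)] by (rule vnorm_add)
  then show ?case using insert.IH unfolding sum.insert[OF insert(1,2)] by linarith
qed auto

lemma vnorm_scale: "vnorm r (\<lambda>a. s * x a) = \<bar>s\<bar> * vnorm r x"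
  unfolding vnorm_L2 using L2_set_right_distrib[of "\<bar>s\<bar>" x "{..<r}"]
  by (simp add: L2_set_def power_mult_distrib)

lemma vnorm_cong: "(\<And>a. a < r \<Longrightarrow> x a = y a) \<Longrightarrow> vnorm r x = vnorm r y"
  by (simp add: vnorm_def)

lemma vnorm_eq0: "vnorm r x = 0 \<Longrightarrow> a < r \<Longrightarrow> x a = 0"
  unfolding vnorm_L2 by (simp add: L2_set_eq_0_iff)

lemma mv_cong: "(\<And>b. b < c \<Longrightarrow> x b = y b) \<Longrightarrow> mv c X x = mv c X y"
  by (simp add: mv_def)

lemma mv_add: "mv c X (x + y) = mv c X x + mv c X y"
  by (simp add: mv_def fun_eq_iff algebra_simps sum.distrib)

lemma mv_minus: "mv c X (x - y) = mv c X x - mv c X y"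
  by (simp add: mv_def fun_eq_iff algebra_simps sum_subtractf)

lemma mv_uminus: "mv c X (- x) = - mv c X x"
  by (simp add: mv_def fun_eq_iff sum_negf)

lemma mv_zero[simp]: "mv c X 0 = 0"
  by (simp add: mv_def fun_eq_iff)

lemma mv_zero'[simp]: "mv c X (\<lambda>a. 0) = (\<lambda>a. 0)"
  by (simp add: mv_def)

lemma mv_sum: "mv c X (\<Sum>j\<in>S. f j) = (\<Sum>j\<in>S. mv c X (f j))"
proof (induction S rule: infinite_finite_induct)
  case (insert a F)
  show ?case unfolding sum.insert[OF insert(1,2)] mv_add insert.IH ..
qed auto

lemma mv_mat_diff: "mv c (X - Y) x = mv c X x - mv c Y x"
  by (simp add: mv_def fun_eq_iff algebra_simps sum_subtractf)

lemma mv_scale: "mv c X (\<lambda>b. s * x b) = (\<lambda>a. s * mv c X x a)"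
  by (simp add: mv_def fun_eq_iff algebra_simps sum_distrib_left)

definition frn :: "nat \<Rightarrow> nat \<Rightarrow> mat \<Rightarrow> real" where
  "frn r c X = sqrt (\<Sum>a<r. \<Sum>b<c. (X a b)^2)"

lemma frn_nonneg[simp]: "0 \<le> frn r c X"
  by (simp add: frn_def sum_nonneg)

lemma mv_frn: "vnorm r (mv c X x) \<le> frn r c X * vnorm c x"
proof -
  have row: "(mv c X x a)^2 \<le> (\<Sum>b<c. (X a b)^2) * (\<Sum>b<c. (x b)^2)" for a
  proof -
    have "\<bar>mv c X x a\<bar> \<le> (\<Sum>b<c. \<bar>X a b\<bar> * \<bar>x b\<bar>)"
      unfolding mv_def by (rule order_trans[OF sum_abs]) (simp add: abs_mult)
    also have "\<dots> \<le> L2_set (X a) {..<c} * L2_set x {..<c}"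
      by (rule L2_set_mult_ineq)
    finally have "\<bar>mv c X x a\<bar> \<le> L2_set (X a) {..<c} * L2_set x {..<c}" .
    then have "(mv c X x a)^2 \<le> (L2_set (X a) {..<c} * L2_set x {..<c})^2"
      by (metis abs_ge_zero power2_abs power_mono)
    also have "\<dots> = (\<Sum>b<c. (X a b)^2) * (\<Sum>b<c. (x b)^2)"
      by (simp add: L2_set_def power_mult_distrib sum_nonneg)
    finally show ?thesis .
  qed
  have "(\<Sum>a<r. (mv c X x a)^2) \<le> (\<Sum>a<r. (\<Sum>b<c. (X a b)^2) * (\<Sum>b<c. (x b)^2))"
    by (rule sum_mono) (rule row)
  also have "\<dots> = (\<Sum>a<r. \<Sum>b<c. (X a b)^2) * (\<Sum>b<c. (x b)^2)"
    by (simp add: sum_distrib_right)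
  finally have "sqrt (\<Sum>a<r. (mv c X x a)^2) \<le> sqrt ((\<Sum>a<r. \<Sum>b<c. (X a b)^2) * (\<Sum>b<c. (x b)^2))"
    by (rule real_sqrt_le_mono)
  then show ?thesis by (simp add: vnorm_def frn_def real_sqrt_mult)
qed

lemma scale_bound:
  assumes "\<And>x. vnorm c x \<le> 1 \<Longrightarrow> vnorm r (mv c X x) \<le> C"
  shows "vnorm r (mv c X x) \<le> C * vnorm c x"
proof (cases "vnorm c x = 0")
  case True
  then have "mv c X x = mv c X 0" by (intro mv_cong) (simp add: vnorm_eq0)
  then show ?thesis using True by simp
next
  case False
  define \<nu> where "\<nu> = vnorm c x"
  have pos: "\<nu> > 0" using False vnorm_nonneg[of c x] unfolding \<nu>_def by linarith
  have "vnorm c (\<lambda>b. (1/\<nu>) * x b) = 1"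
    using pos vnorm_scale[of c "1/\<nu>" x] by (simp add: \<nu>_def[symmetric])
  then have "vnorm r (mv c X (\<lambda>b. (1/\<nu>) * x b)) \<le> C" by (intro assms) simp
  moreover have "vnorm r (mv c X (\<lambda>b. (1/\<nu>) * x b)) = (1/\<nu>) * vnorm r (mv c X x)"
    unfolding mv_scale vnorm_scale using pos by simp
  ultimately have "(1/\<nu>) * vnorm r (mv c X x) \<le> C" by simp
  then show ?thesis using pos unfolding \<nu>_def[symmetric] by (simp add: field_simps)
qed

lemma opnorm_bdd: "bdd_above {vnorm r (mv c X x) | x. vnorm c x \<le> 1}"
proof (rule bdd_aboveI)
  fix y assume "y \<in> {vnorm r (mv c X x) | x. vnorm c x \<le> 1}"
  then obtain x where "y = vnorm r (mv c X x)" "vnorm c x \<le> 1" by auto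
  then show "y \<le> frn r c X"
    using mv_frn[of r c X x] frn_nonneg[of r c X]
    by (metis mult_left_le order_trans)
qed

lemma opnorm_le: "vnorm c x \<le> 1 \<Longrightarrow> vnorm r (mv c X x) \<le> opnorm r c X"
  unfolding opnorm_def by (rule cSup_upper[OF _ opnorm_bdd]) auto

lemma opnorm_nonneg[simp]: "0 \<le> opnorm r c X"
  using opnorm_le[of c 0 r X] by simp

lemma opnorm_bound: "vnorm r (mv c X x) \<le> opnorm r c X * vnorm c x"
  by (rule scale_bound) (rule opnorm_le)

lemma opnorm_col:
  assumes "b < c" shows "(\<Sum>a<r. (X a b)^2) \<le> (opnorm r c X)^2"
proof -
  define e where "e = (\<lambda>l::nat. if l = b then (1::real) else 0)"
  have "vnorm c e = 1" using assms
    by (simp add: vnorm_def e_def if_distrib[of "\<lambda>x. x^2"] sum.If_cases lessThan_def)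
  have me: "mv c X e = (\<lambda>a. X a b)" using assms
    by (simp add: mv_def e_def fun_eq_iff if_distrib[of "\<lambda>x. _ * x"] sum.If_cases lessThan_def)
  have "vnorm r (\<lambda>a. X a b) \<le> opnorm r c X"
    using opnorm_le[of c e r X] \<open>vnorm c e = 1\<close> me by simp
  then have "(vnorm r (\<lambda>a. X a b))^2 \<le> (opnorm r c X)^2"
    by (simp add: power_mono)
  then show ?thesis by (simp add: vnorm_def sum_nonneg)
qed

lemma frn_opnorm: "(\<Sum>a<r. \<Sum>b<c. (X a b)^2) \<le> real c * (opnorm r c X)^2"
proof -
  have "(\<Sum>a<r. \<Sum>b<c. (X a b)^2) = (\<Sum>b<c. \<Sum>a<r. (X a b)^2)" by (rule sum.swap)
  also have "\<dots> \<le> (\<Sum>b<c. (opnorm r c X)^2)" by (rule sum_mono) (simp add: opnorm_col)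
  finally show ?thesis by simp
qed

lemma opnorm_convex:
  assumes "0 \<le> \<theta>" "\<theta> \<le> 1"
  shows "opnorm r c (\<lambda>a b. X a b + \<theta> * (Y a b - X a b)) \<le> (1 - \<theta>) * opnorm r c X + \<theta> * opnorm r c Y"
  unfolding opnorm_def[of r c "\<lambda>a b. X a b + \<theta> * (Y a b - X a b)"]
proof (rule cSup_least)
  show "{vnorm r (mv c (\<lambda>a b. X a b + \<theta> * (Y a b - X a b)) x) |x. vnorm c x \<le> 1} \<noteq> {}"
  proof -
    have "vnorm c (0::vec) \<le> 1" by simp
    then show ?thesis by blast
  qed
next
  fix y assume "y \<in> {vnorm r (mv c (\<lambda>a b. X a b + \<theta> * (Y a b - X a b)) x) |x. vnorm c x \<le> 1}"
  then obtain x where y: "y = vnorm r (mv c (\<lambda>a b. X a b + \<theta> * (Y a b - X a b)) x)" and x: "vnorm c x \<le> 1" by auto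
  have eq: "mv c (\<lambda>a b. X a b + \<theta> * (Y a b - X a b)) x = (\<lambda>a. (1-\<theta>) * mv c X x a) + (\<lambda>a. \<theta> * mv c Y x a)"
    by (simp add: mv_def fun_eq_iff algebra_simps sum.distrib sum_distrib_left sum_subtractf)
  have "y \<le> vnorm r (\<lambda>a. (1-\<theta>) * mv c X x a) + vnorm r (\<lambda>a. \<theta> * mv c Y x a)"
    unfolding y eq by (rule vnorm_add)
  also have "\<dots> = (1-\<theta>) * vnorm r (mv c X x) + \<theta> * vnorm r (mv c Y x)"
    using assms by (simp add: vnorm_scale)
  also have "\<dots> \<le> (1-\<theta>) * opnorm r c X + \<theta> * opnorm r c Y"
    using assms opnorm_le[OF x, of r X] opnorm_le[OF x, of r Y]
    by (intro add_mono mult_left_mono) auto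
  finally show "y \<le> (1-\<theta>) * opnorm r c X + \<theta> * opnorm r c Y" .
qed


lemma funpow_mv_add: "(mv c X ^^ k) (x + y) = (mv c X ^^ k) x + (mv c X ^^ k) y"
proof (induction k)
  case (Suc k) then show ?case by (simp only: funpow.simps comp_apply mv_add)
qed simp

lemma funpow_mv_minus: "(mv c X ^^ k) (x - y) = (mv c X ^^ k) x - (mv c X ^^ k) y"
proof (induction k)
  case (Suc k) then show ?case by (simp only: funpow.simps comp_apply mv_minus)
qed simp

lemma funpow_mv_zero[simp]: "(mv c X ^^ k) 0 = 0"
  by (induction k) simp_all

lemma funpow_mv_zero'[simp]: "(mv c X ^^ k) (\<lambda>a. 0) = (\<lambda>a. 0)"
  by (induction k) simp_all

lemma funpow_mv_sum: "(mv c X ^^ k) (\<Sum>j\<in>S. f j) = (\<Sum>j\<in>S. (mv c X ^^ k) (f j))"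
proof (induction S rule: infinite_finite_induct)
  case (insert a F)
  show ?case unfolding sum.insert[OF insert(1,2)] funpow_mv_add insert.IH ..
qed auto

lemma mv_mm: "mv n (mm n X Y) v = mv n X (mv n Y v)"
  unfolding mv_def mm_def
  by (rule ext) (simp add: sum_distrib_left sum_distrib_right mult.assoc, rule sum.swap)

lemma funpow_opnorm: "vnorm n ((mv n L ^^ k) v) \<le> opnorm n n L ^ k * vnorm n v"
proof (induction k)
  case (Suc k)
  have "vnorm n ((mv n L ^^ Suc k) v) \<le> opnorm n n L * vnorm n ((mv n L ^^ k) v)"
    using opnorm_bound by simp
  also have "\<dots> \<le> opnorm n n L * (opnorm n n L ^ k * vnorm n v)"
    by (rule mult_left_mono[OF Suc]) simp
  finally show ?case by (simp add: mult.assoc)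
qed simp

lemma ss_gamma:
  assumes "glob_strongly_stable n m N A B K \<kappa> \<gamma>"
  shows "\<gamma> \<le> 1"
  using assms opnorm_nonneg unfolding glob_strongly_stable_def by (meson diff_ge_0_iff_ge order_trans)

lemma ss_pow:
  assumes "glob_strongly_stable n m N A B K \<kappa> \<gamma>"
  shows "vnorm n ((mv n (AK m N A B K) ^^ k) x) \<le> \<kappa> * (1-\<gamma>)^k * vnorm n x"
proof -
  obtain Q Qi L where QQi: "\<forall>a<n. \<forall>b<n. mm n Q Qi a b = (if a = b then 1 else 0)
                          \<and> mm n Qi Q a b = (if a = b then 1 else 0)"
     and AKe: "\<forall>a<n. \<forall>b<n. AK m N A B K a b = mm n (mm n Q L) Qi a b"
     and Lb: "opnorm n n L \<le> 1 - \<gamma>"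
     and Qb: "opnorm n n Q * opnorm n n Qi \<le> \<kappa>"
    using assms unfolding glob_strongly_stable_def by blast
  have id1: "mv n Q (mv n Qi z) a = z a" if "a < n" for z a
  proof -
    have "mv n Q (mv n Qi z) a = mv n (mm n Q Qi) z a" by (simp add: mv_mm)
    also have "\<dots> = (\<Sum>b<n. (if a = b then 1 else 0) * z b)"
      unfolding mv_def using QQi that by (intro sum.cong) auto
    also have "\<dots> = (\<Sum>b<n. if a = b then z b else 0)" by (rule sum.cong) auto
    also have "\<dots> = z a" using that by (simp add: sum.delta)
    finally show ?thesis .
  qed
  have id2: "mv n Qi (mv n Q z) a = z a" if "a < n" for z a
  proof -
    have "mv n Qi (mv n Q z) a = mv n (mm n Qi Q) z a" by (simp add: mv_mm)
    also have "\<dots> = (\<Sum>b<n. (if a = b then 1 else 0) * z b)"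
      unfolding mv_def using QQi that by (intro sum.cong) auto
    also have "\<dots> = (\<Sum>b<n. if a = b then z b else 0)" by (rule sum.cong) auto
    also have "\<dots> = z a" using that by (simp add: sum.delta)
    finally show ?thesis .
  qed
  have dec: "\<forall>a<n. (mv n (AK m N A B K) ^^ k) x a = mv n Q ((mv n L ^^ k) (mv n Qi x)) a"
  proof (induction k)
    case 0
    then show ?case using id1 by simp
  next
    case (Suc k)
    define z where "z = (mv n L ^^ k) (mv n Qi x)"
    show ?case
    proof (intro allI impI)
      fix a assume a: "a < n"
      have "(mv n (AK m N A B K) ^^ Suc k) x a = mv n (AK m N A B K) (mv n Q z) a"
        using Suc unfolding z_def by (simp add: mv_cong[of n "(mv n (AK m N A B K) ^^ k) x"])
      also have "\<dots> = mv n (mm n (mm n Q L) Qi) (mv n Q z) a"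
        unfolding mv_def using AKe a by (intro sum.cong) auto
      also have "\<dots> = mv n Q (mv n L (mv n Qi (mv n Q z))) a" by (simp add: mv_mm)
      also have "\<dots> = mv n Q (mv n L z) a"
        using id2 by (simp add: mv_cong[of n "mv n Qi (mv n Q z)" z])
      also have "\<dots> = mv n Q ((mv n L ^^ Suc k) (mv n Qi x)) a" by (simp add: z_def)
      finally show "(mv n (AK m N A B K) ^^ Suc k) x a = mv n Q ((mv n L ^^ Suc k) (mv n Qi x)) a" .
    qed
  qed
  have "vnorm n ((mv n (AK m N A B K) ^^ k) x) = vnorm n (mv n Q ((mv n L ^^ k) (mv n Qi x)))"
    using dec by (intro vnorm_cong) auto
  also have "\<dots> \<le> opnorm n n Q * (opnorm n n L ^ k * (opnorm n n Qi * vnorm n x))"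
    using opnorm_bound[of n n Q] funpow_opnorm[of n k L] opnorm_bound[of n n Qi x]
    by (meson mult_left_mono opnorm_nonneg order_trans zero_le_power)
  also have "\<dots> = (opnorm n n Q * opnorm n n Qi) * opnorm n n L ^ k * vnorm n x" by simp
  also have "\<dots> \<le> \<kappa> * (1-\<gamma>)^k * vnorm n x"
    using Qb Lb order_trans[OF mult_nonneg_nonneg[OF opnorm_nonneg opnorm_nonneg] Qb]
    by (intro mult_right_mono mult_mono power_mono) auto
  finally show ?thesis .
qed

lemma ss_K:
  assumes "glob_strongly_stable n m N A B K \<kappa> \<gamma>" "j < N"
  shows "vnorm (m j) (mv n (K j) x) \<le> \<kappa> * vnorm n x"
proof (rule scale_bound)
  fix x :: vec assume x: "vnorm n x \<le> 1"
  have bdd: "bdd_above {sqrt (\<Sum>j<N. (vnorm (m j) (mv n (K j) x))^2) | x. vnorm n x \<le> 1}"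
  proof (rule bdd_aboveI)
    fix y assume "y \<in> {sqrt (\<Sum>j<N. (vnorm (m j) (mv n (K j) x))^2) | x. vnorm n x \<le> 1}"
    then obtain x where y: "y = sqrt (\<Sum>j<N. (vnorm (m j) (mv n (K j) x))^2)" and x: "vnorm n x \<le> 1" by auto
    have "vnorm (m j) (mv n (K j) x) \<le> frn (m j) n (K j)" for j
      using mv_frn[of "m j" n "K j" x] x frn_nonneg[of "m j" n "K j"] by (metis mult_left_le order_trans)
    then show "y \<le> sqrt (\<Sum>j<N. (frn (m j) n (K j))^2)"
      unfolding y by (intro real_sqrt_le_mono sum_mono power_mono) auto
  qed
  have "vnorm (m j) (mv n (K j) x) \<le> L2_set (\<lambda>j. vnorm (m j) (mv n (K j) x)) {..<N}"
    using assms(2) by (intro member_le_L2_set) auto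
  also have "\<dots> \<le> stack_opnorm n m N K"
    unfolding stack_opnorm_def L2_set_def using x by (intro cSup_upper[OF _ bdd]) auto
  also have "\<dots> \<le> \<kappa>" using assms(1) unfolding glob_strongly_stable_def by simp
  finally show "vnorm (m j) (mv n (K j) x) \<le> \<kappa>" .
qed


lemma sum_fun_app: "(\<Sum>j\<in>S. f j) x = (\<Sum>j\<in>S. f j x)"
  by (induction S rule: infinite_finite_induct) auto

lemma mv_AK: "mv n (AK m N A B K) x = mv n A x - (\<Sum>j<N. mv (m j) (B j) (mv n (K j) x))"
proof (rule ext)
  fix a
  have "mv n (AK m N A B K) x a = (\<Sum>b<n. A a b * x b) - (\<Sum>b<n. \<Sum>j<N. \<Sum>l<m j. B j a l * K j l b * x b)"
    by (simp add: mv_def AK_def left_diff_distrib sum_subtractf sum_distrib_right)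
  also have "(\<Sum>b<n. \<Sum>j<N. \<Sum>l<m j. B j a l * K j l b * x b) = (\<Sum>j<N. \<Sum>b<n. \<Sum>l<m j. B j a l * K j l b * x b)"
    by (rule sum.swap)
  also have "\<dots> = (\<Sum>j<N. \<Sum>l<m j. \<Sum>b<n. B j a l * K j l b * x b)"
    by (rule sum.cong[OF refl], rule sum.swap)
  also have "\<dots> = (\<Sum>j<N. \<Sum>l<m j. B j a l * (\<Sum>b<n. K j l b * x b))"
    by (simp add: sum_distrib_left mult.assoc)
  finally show "mv n (AK m N A B K) x a = (mv n A x - (\<Sum>j<N. mv (m j) (B j) (mv n (K j) x))) a"
    by (simp add: mv_def sum_fun_app)
qed

lemma traj_step:
  "traj n m N A B K H Q w (Suc s) = mv n (AK m N A B K) (traj n m N A B K H Q w s)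
     + ((\<Sum>j<N. mv (m j) (B j) (\<Sum>p\<in>{1..H}. mv n (Q j s (p - 1)) (wp w s p))) + w s)"
proof -
  define x where "x = traj n m N A B K H Q w s"
  define e where "e j = (\<Sum>p\<in>{1..H}. mv n (Q j s (p - 1)) (wp w s p))" for j
  have "traj n m N A B K H Q w (Suc s) = mv n A x + (\<Sum>j<N. mv (m j) (B j) (- mv n (K j) x + e j)) + w s"
    by (simp add: x_def e_def dac_act_def)
  also have "(\<Sum>j<N. mv (m j) (B j) (- mv n (K j) x + e j)) = (\<Sum>j<N. mv (m j) (B j) (e j)) - (\<Sum>j<N. mv (m j) (B j) (mv n (K j) x))"
    by (simp add: mv_minus sum_subtractf)
  finally show ?thesis unfolding mv_AK x_def[symmetric] e_def[symmetric]
    by (simp only: fun_eq_iff plus_fun_apply minus_apply) (simp add: algebra_simps)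
qed


locale sysl =
  fixes n :: nat and m :: "nat \<Rightarrow> nat" and N :: nat and A :: mat and B :: "nat \<Rightarrow> mat"
    and K :: "nat \<Rightarrow> mat" and H :: nat and w :: "nat \<Rightarrow> vec"
    and \<kappa> \<gamma> W \<beta> :: real
  assumes ss: "glob_strongly_stable n m N A B K \<kappa> \<gamma>"
    and gpos: "0 < \<gamma>" and kap1: "1 \<le> \<kappa>"
    and wb: "\<And>t. vnorm n (w t) \<le> W"
    and bb: "\<And>j. j < N \<Longrightarrow> opnorm n (m j) (B j) \<le> \<beta>"
begin

definition "Ap k x = (mv n (AK m N A B K) ^^ k) x"
definition "edac Q j s = (\<Sum>p\<in>{1..H}. mv n (Q j s (p - 1)) (wp w s p))"
definition "zin Q s = (\<Sum>j<N. mv (m j) (B j) (edac Q j s)) + w s"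
abbreviation "tr Q \<equiv> traj n m N A B K H Q w"

lemma g1: "\<gamma> \<le> 1" using ss_gamma[OF ss] .

lemma W0: "0 \<le> W" using wb[of 0] vnorm_nonneg[of n "w 0"] by linarith

lemma trstep: "tr Q (Suc s) = Ap 1 (tr Q s) + zin Q s"
  unfolding traj_step Ap_def zin_def edac_def by simp

lemma Ap_0[simp]: "Ap 0 x = x" unfolding Ap_def by simp
lemma Ap_add: "Ap k (x + y) = Ap k x + Ap k y" unfolding Ap_def by (rule funpow_mv_add)
lemma Ap_minus: "Ap k (x - y) = Ap k x - Ap k y" unfolding Ap_def by (rule funpow_mv_minus)
lemma Ap_zero[simp]: "Ap k 0 = 0" unfolding Ap_def by simp
lemma Ap_sum: "Ap k (\<Sum>j\<in>S. f j) = (\<Sum>j\<in>S. Ap k (f j))" unfolding Ap_def by (rule funpow_mv_sum)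
lemma Ap_comp: "Ap k (Ap 1 x) = Ap (Suc k) x"
  unfolding Ap_def by (simp add: funpow_Suc_right del: funpow.simps)

lemma Ap_bound: "vnorm n (Ap k x) \<le> \<kappa> * (1-\<gamma>)^k * vnorm n x"
  unfolding Ap_def by (rule ss_pow[OF ss])

lemma Ap_bound1: "vnorm n (Ap k x) \<le> \<kappa> * vnorm n x"
proof -
  have "(1-\<gamma>)^k \<le> 1" using gpos g1 by (intro power_le_one) auto
  then have "\<kappa> * (1-\<gamma>)^k * vnorm n x \<le> \<kappa> * vnorm n x" using kap1
    by (intro mult_right_mono) (auto intro: mult_left_le)
  then show ?thesis using Ap_bound[of k x] by linarith
qed

lemma trunc: "h + 1 \<le> t \<Longrightarrow> tr Q t = Ap (h+1) (tr Q (t-h-1)) + (\<Sum>k\<le>h. Ap k (zin Q (t-1-k)))"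
proof (induction h arbitrary: t)
  case 0
  then obtain s where t: "t = Suc s" by (cases t) auto
  show ?case unfolding t trstep by simp
next
  case (Suc h)
  have IH: "tr Q t = Ap (h+1) (tr Q (t-h-1)) + (\<Sum>k\<le>h. Ap k (zin Q (t-1-k)))"
    using Suc.prems by (intro Suc.IH) simp
  have e: "t - h - 1 = Suc (t - 1 - Suc h)" using Suc.prems by simp
  have e2: "t - Suc h - 1 = t - 1 - Suc h" by simp
  have "Ap (h+1) (tr Q (t-h-1)) = Ap (Suc h + 1) (tr Q (t - 1 - Suc h)) + Ap (Suc h) (zin Q (t - 1 - Suc h))"
    unfolding e trstep Ap_add Ap_comp by simp
  then show ?case unfolding IH e2 sum.atMost_Suc by (simp only: ac_simps)
qed

lemma tr_sum: "tr Q t = (\<Sum>k<t. Ap k (zin Q (t-1-k)))"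
proof (cases t)
  case 0 then show ?thesis by simp
next
  case (Suc s)
  have "tr Q t = Ap (s+1) (tr Q (t-s-1)) + (\<Sum>k\<le>s. Ap k (zin Q (t-1-k)))"
    by (rule trunc) (simp add: Suc)
  also have "\<dots> = (\<Sum>k\<le>s. Ap k (zin Q (t-1-k)))" using Suc by simp
  finally show ?thesis using Suc by (simp add: lessThan_Suc_atMost)
qed

lemma geo: "(\<Sum>k<h. (1-\<gamma>)^k) \<le> 1/\<gamma>"
proof -
  have "(\<Sum>k<h. (1-\<gamma>)^k) = (1 - (1-\<gamma>)^h) / \<gamma>" using gpos by (simp add: sum_gp_strict)
  also have "\<dots> \<le> 1/\<gamma>" using gpos g1 by (intro divide_right_mono) auto
  finally show ?thesis .
qed

lemma geo1: "(\<Sum>p\<in>{1..h}. (1-\<gamma>)^p) \<le> 1/\<gamma>"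
proof -
  have "(\<Sum>p\<in>{1..h}. (1-\<gamma>)^p) \<le> (\<Sum>p<Suc h. (1-\<gamma>)^p)"
    using gpos g1 by (intro sum_mono2) auto
  then show ?thesis using geo[of "Suc h"] by linarith
qed

lemma tr_bound:
  assumes "\<And>s. vnorm n (zin Q s) \<le> Zb"
  shows "vnorm n (tr Q t) \<le> \<kappa> * Zb / \<gamma>"
proof -
  have Zb0: "0 \<le> Zb" using assms[of 0] vnorm_nonneg[of n "zin Q 0"] by linarith
  have "vnorm n (tr Q t) \<le> (\<Sum>k<t. vnorm n (Ap k (zin Q (t-1-k))))"
    unfolding tr_sum by (rule vnorm_sum)
  also have "\<dots> \<le> (\<Sum>k<t. \<kappa> * (1-\<gamma>)^k * Zb)"
    using Ap_bound assms kap1 gpos g1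
    by (intro sum_mono) (meson order_trans mult_left_mono mult_nonneg_nonneg zero_le_power diff_ge_0_iff_ge order_trans[OF zero_le_one])
  also have "\<dots> = \<kappa> * Zb * (\<Sum>k<t. (1-\<gamma>)^k)" by (simp add: sum_distrib_left mult_ac)
  also have "\<dots> \<le> \<kappa> * Zb * (1/\<gamma>)" using kap1 Zb0 by (intro mult_left_mono geo) auto
  finally show ?thesis by simp
qed

end


context sysl
begin

lemma wp_bound: "vnorm n (wp w t p) \<le> W"
  unfolding wp_def using wb W0 by auto

lemma wp_shift: "k + 1 \<le> t \<Longrightarrow> wp w t (Suc (k + p)) = wp w (t-1-k) p"
  unfolding wp_def by (auto simp: algebra_simps)

definition "U Q t k l = (\<Sum>j<N. mv (m j) (B j) (mv n (Q j (t-1-k) (l-k-1)) (wp w t (Suc l))))"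

lemma ideal_form: "ideal_state n m N A B K H Q w t =
   (\<Sum>l\<in>{0..2*H}. (if l \<le> H then Ap l (wp w t (Suc l)) else 0)
      + (\<Sum>k\<in>{0..H}. if k < l \<and> l - k \<le> H then Ap k (U Q t k l) else 0))"
  unfolding ideal_state_def Ap_def U_def ..

lemma ideal_trunc:
  assumes t: "H + 1 \<le> t"
  shows "ideal_state n m N A B K H Q w t = (\<Sum>k\<le>H. Ap k (zin Q (t-1-k)))"
proof -
  have I1: "(\<Sum>l\<in>{0..2*H}. if l \<le> H then Ap l (wp w t (Suc l)) else 0) = (\<Sum>k\<le>H. Ap k (w (t-1-k)))"
  proof -
    have "(\<Sum>l\<in>{0..2*H}. if l \<le> H then Ap l (wp w t (Suc l)) else 0) = (\<Sum>l\<in>{x\<in>{0..2*H}. x \<le> H}. Ap l (wp w t (Suc l)))"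
      by (rule sum.inter_filter[symmetric]) simp
    also have "{x\<in>{0..2*H}. x \<le> H} = {..H}" by auto
    also have "(\<Sum>l\<le>H. Ap l (wp w t (Suc l))) = (\<Sum>k\<le>H. Ap k (w (t-1-k)))"
      using t by (intro sum.cong) (auto simp: wp_def)
    finally show ?thesis .
  qed
  have I2: "(\<Sum>l\<in>{0..2*H}. if k < l \<and> l - k \<le> H then Ap k (U Q t k l) else 0)
      = (\<Sum>p\<in>{1..H}. Ap k (\<Sum>j<N. mv (m j) (B j) (mv n (Q j (t-1-k) (p-1)) (wp w (t-1-k) p))))"
    if k: "k \<le> H" for k
  proof -
    have "(\<Sum>l\<in>{0..2*H}. if k < l \<and> l - k \<le> H then Ap k (U Q t k l) else 0)
        = (\<Sum>l\<in>{x\<in>{0..2*H}. k < x \<and> x - k \<le> H}. Ap k (U Q t k l))"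
      by (rule sum.inter_filter[symmetric]) simp
    also have "{x\<in>{0..2*H}. k < x \<and> x - k \<le> H} = {1+k..H+k}" using k by auto
    also have "(\<Sum>l\<in>{1+k..H+k}. Ap k (U Q t k l)) = (\<Sum>p\<in>{1..H}. Ap k (U Q t k (p+k)))"
      by (rule sum.shift_bounds_cl_nat_ivl)
    also have "\<dots> = (\<Sum>p\<in>{1..H}. Ap k (\<Sum>j<N. mv (m j) (B j) (mv n (Q j (t-1-k) (p-1)) (wp w (t-1-k) p))))"
    proof (rule sum.cong[OF refl])
      fix p assume p: "p \<in> {1..H}"
      have "wp w t (Suc (p + k)) = wp w (t-1-k) p" using wp_shift[of k t p] k t by (simp add: add.commute)
      moreover have "p + k - k - 1 = p - 1" by simp
      ultimately show "Ap k (U Q t k (p+k)) = Ap k (\<Sum>j<N. mv (m j) (B j) (mv n (Q j (t-1-k) (p-1)) (wp w (t-1-k) p)))"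
        unfolding U_def by simp
    qed
    finally show ?thesis .
  qed
  have R: "Ap k (zin Q (t-1-k)) = Ap k (w (t-1-k))
      + (\<Sum>p\<in>{1..H}. Ap k (\<Sum>j<N. mv (m j) (B j) (mv n (Q j (t-1-k) (p-1)) (wp w (t-1-k) p))))" for k
  proof -
    have "(\<Sum>j<N. mv (m j) (B j) (edac Q j (t-1-k)))
        = (\<Sum>p\<in>{1..H}. \<Sum>j<N. mv (m j) (B j) (mv n (Q j (t-1-k) (p-1)) (wp w (t-1-k) p)))"
      unfolding edac_def mv_sum by (rule sum.swap)
    then show ?thesis unfolding zin_def Ap_add Ap_sum[symmetric] by (simp only: add.commute)
  qed
  have "ideal_state n m N A B K H Q w t = (\<Sum>k\<le>H. Ap k (w (t-1-k)))
      + (\<Sum>l\<in>{0..2*H}. \<Sum>k\<in>{0..H}. if k < l \<and> l - k \<le> H then Ap k (U Q t k l) else 0)"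
    unfolding ideal_form sum.distrib I1 ..
  also have "(\<Sum>l\<in>{0..2*H}. \<Sum>k\<in>{0..H}. if k < l \<and> l - k \<le> H then Ap k (U Q t k l) else 0)
      = (\<Sum>k\<in>{0..H}. \<Sum>l\<in>{0..2*H}. if k < l \<and> l - k \<le> H then Ap k (U Q t k l) else 0)"
    by (rule sum.swap)
  also have "\<dots> = (\<Sum>k\<le>H. \<Sum>p\<in>{1..H}. Ap k (\<Sum>j<N. mv (m j) (B j) (mv n (Q j (t-1-k) (p-1)) (wp w (t-1-k) p))))"
  proof (rule sum.cong)
    show "{0..H} = {..H}" by auto
  next
    fix k assume "k \<in> {..H}"
    then show "(\<Sum>l\<in>{0..2*H}. if k < l \<and> l - k \<le> H then Ap k (U Q t k l) else 0) =
      (\<Sum>p\<in>{1..H}. Ap k (\<Sum>j<N. mv (m j) (B j) (mv n (Q j (t-1-k) (p-1)) (wp w (t-1-k) p))))"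
      by (intro I2) simp
  qed
  finally show ?thesis unfolding R sum.distrib .
qed

end


lemma mv_zero_mat[simp]: "mv c (\<lambda>a b. 0) x = 0"
  by (simp add: mv_def fun_eq_iff)

context sysl
begin

lemma beta0: "0 < N \<Longrightarrow> 0 \<le> \<beta>"
  using bb[of 0] opnorm_nonneg[of n "m 0" "B 0"] by linarith

lemma ideal_diff:
  assumes i: "i < N" and oth: "\<And>j. j \<noteq> i \<Longrightarrow> Q' j = Q j" and d0: "0 \<le> \<delta>"
    and dl: "\<And>k q. k \<le> H \<Longrightarrow> q < H \<Longrightarrow> frn (m i) n (Q i (t-1-k) q - Q' i (t-1-k) q) \<le> \<delta>"
  shows "vnorm n (ideal_state n m N A B K H Q w t - ideal_state n m N A B K H Q' w t)
           \<le> real ((2*H+1)*(H+1)) * (\<kappa> * (\<beta> * (\<delta> * W)))"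
proof -
  define F where "F Q k l = (if k < l \<and> l - k \<le> H then Ap k (U Q t k l) else 0)" for Q k l
  have eq: "ideal_state n m N A B K H Q w t - ideal_state n m N A B K H Q' w t
      = (\<Sum>l\<in>{0..2*H}. \<Sum>k\<in>{0..H}. F Q k l - F Q' k l)"
    unfolding ideal_form F_def[symmetric] sum_subtractf[symmetric] add_diff_cancel_left ..
  have b: "vnorm n (F Q k l - F Q' k l) \<le> \<kappa> * (\<beta> * (\<delta> * W))" if k: "k \<le> H" for k l
  proof (cases "k < l \<and> l - k \<le> H")
    case False
    have "0 \<le> \<kappa> * (\<beta> * (\<delta> * W))" using kap1 beta0 i d0 W0 by simp
    then show ?thesis unfolding F_def using False by auto
  next
    case True
    define s where "s = t - 1 - k"
    define q where "q = l - k - 1"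
    have q: "q < H" using True unfolding q_def by arith
    define D where "D j = mv (m j) (B j) (mv n (Q j s q) (wp w t (Suc l))) - mv (m j) (B j) (mv n (Q' j s q) (wp w t (Suc l)))" for j
    have UU: "U Q t k l - U Q' t k l = (\<Sum>j<N. D j)"
      unfolding U_def D_def s_def[symmetric] q_def[symmetric] sum_subtractf ..
    have "(\<Sum>j<N. D j) = D i + (\<Sum>j\<in>{..<N} - {i}. D j)" using i by (intro sum.remove) auto
    also have "(\<Sum>j\<in>{..<N} - {i}. D j) = 0" unfolding D_def using oth by (intro sum.neutral) auto
    finally have Ds: "(\<Sum>j<N. D j) = D i" by simp
    have "D i = mv (m i) (B i) (mv n (Q i s q - Q' i s q) (wp w t (Suc l)))"
      unfolding D_def mv_minus[symmetric] mv_mat_diff ..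
    then have "vnorm n (D i) \<le> opnorm n (m i) (B i) * vnorm (m i) (mv n (Q i s q - Q' i s q) (wp w t (Suc l)))"
      by (simp add: opnorm_bound)
    also have "\<dots> \<le> \<beta> * (frn (m i) n (Q i s q - Q' i s q) * W)"
    proof (rule mult_mono)
      show "vnorm (m i) (mv n (Q i s q - Q' i s q) (wp w t (Suc l))) \<le> frn (m i) n (Q i s q - Q' i s q) * W"
        using mv_frn[of "m i" n "Q i s q - Q' i s q" "wp w t (Suc l)"] wp_bound[of t "Suc l"]
          mult_left_mono[OF wp_bound[of t "Suc l"] frn_nonneg[of "m i" n "Q i s q - Q' i s q"]]
        by linarith
    qed (use bb[OF i] beta0 i in auto)
    also have "\<dots> \<le> \<beta> * (\<delta> * W)"
      using dl[OF k q] beta0 i W0 unfolding s_def by (intro mult_left_mono mult_right_mono) auto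
    finally have Di: "vnorm n (D i) \<le> \<beta> * (\<delta> * W)" .
    have "F Q k l - F Q' k l = Ap k (D i)"
      unfolding F_def using True by (simp add: Ap_minus[symmetric] UU Ds)
    moreover have "\<kappa> * vnorm n (D i) \<le> \<kappa> * (\<beta> * (\<delta> * W))"
      using Di kap1 by (intro mult_left_mono) auto
    ultimately show ?thesis using Ap_bound1[of k "D i"] by simp
  qed
  have "vnorm n (ideal_state n m N A B K H Q w t - ideal_state n m N A B K H Q' w t)
      \<le> (\<Sum>l\<in>{0..2*H}. \<Sum>k\<in>{0..H}. vnorm n (F Q k l - F Q' k l))"
    unfolding eq by (rule order_trans[OF vnorm_sum sum_mono]) (rule vnorm_sum)
  also have "\<dots> \<le> (\<Sum>l\<in>{0..2*H}. \<Sum>k\<in>{0..H}. \<kappa> * (\<beta> * (\<delta> * W)))"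
    using b by (intro sum_mono) auto
  also have "\<dots> = real ((2*H+1)*(H+1)) * (\<kappa> * (\<beta> * (\<delta> * W)))" by (simp add: algebra_simps)
  finally show ?thesis .
qed

lemma edac_bound:
  assumes "Q j s \<in> calM n (m j) H \<kappa> \<gamma>"
  shows "vnorm (m j) (edac Q j s) \<le> 2 * \<kappa>^2 * W / \<gamma>"
proof -
  have "vnorm (m j) (edac Q j s) \<le> (\<Sum>p\<in>{1..H}. vnorm (m j) (mv n (Q j s (p - 1)) (wp w s p)))"
    unfolding edac_def by (rule vnorm_sum)
  also have "\<dots> \<le> (\<Sum>p\<in>{1..H}. 2 * \<kappa>^2 * W * (1-\<gamma>)^p)"
  proof (rule sum_mono)
    fix p assume p: "p \<in> {1..H}"
    have o: "opnorm (m j) n (Q j s (p - 1)) \<le> 2 * \<kappa>^2 * (1-\<gamma>)^p" using assms p unfolding calM_def by auto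
    have "vnorm (m j) (mv n (Q j s (p - 1)) (wp w s p)) \<le> opnorm (m j) n (Q j s (p - 1)) * W"
      using opnorm_bound[of "m j" n "Q j s (p - 1)" "wp w s p"]
        mult_left_mono[OF wp_bound[of s p] opnorm_nonneg[of "m j" n "Q j s (p - 1)"]]
      by linarith
    also have "\<dots> \<le> 2 * \<kappa>^2 * (1-\<gamma>)^p * W" using o W0 by (rule mult_right_mono)
    finally show "vnorm (m j) (mv n (Q j s (p - 1)) (wp w s p)) \<le> 2 * \<kappa>^2 * W * (1-\<gamma>)^p"
      by (simp add: mult_ac)
  qed
  also have "\<dots> = 2 * \<kappa>^2 * W * (\<Sum>p\<in>{1..H}. (1-\<gamma>)^p)" by (simp add: sum_distrib_left)
  also have "\<dots> \<le> 2 * \<kappa>^2 * W * (1/\<gamma>)" using W0 by (intro mult_left_mono geo1) auto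
  finally show ?thesis by simp
qed

lemma zin_bound:
  assumes "\<And>j. j < N \<Longrightarrow> Q j s \<in> calM n (m j) H \<kappa> \<gamma>"
  shows "vnorm n (zin Q s) \<le> W + real N * (\<beta> * (2 * \<kappa>^2 * W / \<gamma>))"
proof -
  have "vnorm n (\<Sum>j<N. mv (m j) (B j) (edac Q j s)) \<le> (\<Sum>j<N. vnorm n (mv (m j) (B j) (edac Q j s)))"
    by (rule vnorm_sum)
  also have "\<dots> \<le> (\<Sum>j<N. \<beta> * (2 * \<kappa>^2 * W / \<gamma>))"
  proof (rule sum_mono)
    fix j assume j: "j \<in> {..<N}"
    have "vnorm n (mv (m j) (B j) (edac Q j s)) \<le> opnorm n (m j) (B j) * vnorm (m j) (edac Q j s)"
      by (rule opnorm_bound)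
    also have "\<dots> \<le> \<beta> * (2 * \<kappa>^2 * W / \<gamma>)"
      using bb[of j] j edac_bound[of Q j s] assms[of j] beta0 by (intro mult_mono) auto
    finally show "vnorm n (mv (m j) (B j) (edac Q j s)) \<le> \<beta> * (2 * \<kappa>^2 * W / \<gamma>)" .
  qed
  finally have "vnorm n (\<Sum>j<N. mv (m j) (B j) (edac Q j s)) \<le> real N * (\<beta> * (2 * \<kappa>^2 * W / \<gamma>))" by simp
  then show ?thesis unfolding zin_def using vnorm_add[of n "\<Sum>j<N. mv (m j) (B j) (edac Q j s)" "w s"] wb[of s]
    by linarith
qed

end


definition fn :: "nat \<Rightarrow> nat \<Rightarrow> nat \<Rightarrow> (nat \<Rightarrow> mat) \<Rightarrow> real" where
  "fn H r c X = sqrt (frob H r c X X)"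

definition sm :: "nat \<Rightarrow> nat \<Rightarrow> nat \<Rightarrow> (nat \<Rightarrow> nat \<Rightarrow> nat \<Rightarrow> real) \<Rightarrow> real" where
  "sm H r c f = (\<Sum>p<H. \<Sum>a<r. \<Sum>b<c. f p a b)"

lemma frob_sm: "frob H r c X Y = sm H r c (\<lambda>p a b. X p a b * Y p a b)"
  by (simp add: frob_def sm_def)

lemma sm_add: "sm H r c (\<lambda>p a b. f p a b + g p a b) = sm H r c f + sm H r c g"
  by (simp add: sm_def sum.distrib)

lemma sm_diff: "sm H r c (\<lambda>p a b. f p a b - g p a b) = sm H r c f - sm H r c g"
  by (simp add: sm_def sum_subtractf)

lemma sm_scale: "sm H r c (\<lambda>p a b. k * f p a b) = k * sm H r c f"
  by (simp add: sm_def sum_distrib_left)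

lemma sm_nonneg: "(\<And>p a b. 0 \<le> f p a b) \<Longrightarrow> 0 \<le> sm H r c f"
  by (simp add: sm_def sum_nonneg)

lemma sm_cong: "(\<And>p a b. f p a b = g p a b) \<Longrightarrow> sm H r c f = sm H r c g"
  by (simp add: sm_def)

lemma frob_self_nonneg: "0 \<le> frob H r c X X"
  unfolding frob_sm by (rule sm_nonneg) simp

lemma fn_nonneg[simp]: "0 \<le> fn H r c X" by (simp add: fn_def frob_self_nonneg)

lemma fn_sq: "(fn H r c X)^2 = frob H r c X X"
  by (simp add: fn_def frob_self_nonneg)

lemma fn_L2: "fn H r c X = L2_set (\<lambda>(p,a,b). X p a b) ({..<H} \<times> {..<r} \<times> {..<c})"
proof -
  have "frob H r c X X = (\<Sum>p<H. \<Sum>(a,b)\<in>{..<r} \<times> {..<c}. (X p a b)^2)"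
    unfolding frob_def by (simp add: sum.cartesian_product power2_eq_square)
  also have "\<dots> = (\<Sum>(p,ab)\<in>{..<H} \<times> ({..<r} \<times> {..<c}). (case ab of (a,b) \<Rightarrow> (X p a b)^2))"
    by (simp add: sum.cartesian_product)
  also have "\<dots> = (\<Sum>i\<in>{..<H} \<times> {..<r} \<times> {..<c}. ((\<lambda>(p,a,b). X p a b) i)^2)"
    by (intro sum.cong) auto
  finally show ?thesis by (simp add: fn_def L2_set_def)
qed

lemma fn_triangle: "fn H r c (X - Z) \<le> fn H r c (X - Y) + fn H r c (Y - Z)"
proof -
  have "fn H r c (X - Z) = L2_set (\<lambda>i. (\<lambda>(p,a,b). (X - Y) p a b) i + (\<lambda>(p,a,b). (Y - Z) p a b) i) ({..<H} \<times> {..<r} \<times> {..<c})"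
    unfolding fn_L2 by (intro L2_set_cong) auto
  also have "\<dots> \<le> fn H r c (X - Y) + fn H r c (Y - Z)"
    unfolding fn_L2 by (rule L2_set_triangle_ineq)
  finally show ?thesis .
qed

lemma fn_sym: "fn H r c (X - Y) = fn H r c (Y - X)"
  unfolding fn_def frob_def by (simp add: power2_eq_square[symmetric] power2_commute)

lemma frn_le_fn: "q < H \<Longrightarrow> frn r c (X q) \<le> fn H r c X"
  unfolding frn_def fn_def frob_def
proof (intro real_sqrt_le_mono)
  assume q: "q < H"
  have "(\<Sum>a<r. \<Sum>b<c. X q a b * X q a b) \<le> (\<Sum>p<H. \<Sum>a<r. \<Sum>b<c. X p a b * X p a b)"
    by (rule member_le_sum[where f = "\<lambda>p. \<Sum>a<r. \<Sum>b<c. X p a b * X p a b"]) (auto intro!: sum_nonneg simp: q)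
  then show "(\<Sum>a<r. \<Sum>b<c. (X q a b)^2) \<le> (\<Sum>p<H. \<Sum>a<r. \<Sum>b<c. X p a b * X p a b)"
    by (simp add: power2_eq_square)
qed

lemma proj_opt:
  assumes pr: "is_proj H r c S Z X" and Y: "Y \<in> S"
    and cv: "\<And>\<theta>. 0 < \<theta> \<Longrightarrow> \<theta> \<le> 1 \<Longrightarrow> (\<lambda>p a b. X p a b + \<theta> * (Y p a b - X p a b)) \<in> S"
  shows "frob H r c (X - Y) (X - Y) \<le> frob H r c (Z - Y) (Z - Y)"
proof -
  define u where "u p a b = X p a b - Z p a b" for p a b
  define v where "v p a b = Y p a b - X p a b" for p a b
  define sa where "sa = sm H r c (\<lambda>p a b. u p a b * v p a b)"
  define sb where "sb = sm H r c (\<lambda>p a b. v p a b * v p a b)"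
  define sc where "sc = sm H r c (\<lambda>p a b. u p a b * u p a b)"
  have sb0: "0 \<le> sb" unfolding sb_def by (rule sm_nonneg) simp
  have key: "0 \<le> 2 * sa + \<theta> * sb" if th: "0 < \<theta>" "\<theta> \<le> 1" for \<theta>
  proof -
    have "frob H r c (X - Z) (X - Z) \<le> frob H r c ((\<lambda>p a b. X p a b + \<theta> * (Y p a b - X p a b)) - Z) ((\<lambda>p a b. X p a b + \<theta> * (Y p a b - X p a b)) - Z)"
      using pr cv[OF th] unfolding is_proj_def by blast
    moreover have "frob H r c (X - Z) (X - Z) = sc" unfolding frob_sm sc_def u_def by simp
    moreover have "frob H r c ((\<lambda>p a b. X p a b + \<theta> * (Y p a b - X p a b)) - Z) ((\<lambda>p a b. X p a b + \<theta> * (Y p a b - X p a b)) - Z)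
        = sm H r c (\<lambda>p a b. u p a b * u p a b + (2 * \<theta>) * (u p a b * v p a b) + \<theta>^2 * (v p a b * v p a b))"
      unfolding frob_sm u_def v_def by (rule sm_cong) (simp add: algebra_simps power2_eq_square)
    moreover have "\<dots> = sc + 2 * \<theta> * sa + \<theta>^2 * sb"
      unfolding sm_add sm_scale sa_def sb_def sc_def by simp
    ultimately have "0 \<le> 2 * \<theta> * sa + \<theta>^2 * sb" by simp
    then have "0 \<le> \<theta> * (2 * sa + \<theta> * sb)" by (simp add: algebra_simps power2_eq_square)
    then show ?thesis using th by (simp add: zero_le_mult_iff)
  qed
  have sa0: "0 \<le> sa"
  proof (rule ccontr)
    assume "\<not> 0 \<le> sa"
    then have neg: "sa < 0" by simp
    define \<theta> where "\<theta> = min 1 (- sa / (sb + 1))"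
    have th0: "0 < \<theta>" unfolding \<theta>_def using neg sb0 by (simp add: divide_neg_pos)
    have th1: "\<theta> \<le> 1" unfolding \<theta>_def by simp
    have "\<theta> * sb \<le> (- sa / (sb + 1)) * sb" unfolding \<theta>_def using sb0 by (intro mult_right_mono) auto
    also have "\<dots> = - sa * (sb / (sb + 1))" by simp
    also have "\<dots> \<le> - sa * 1" using neg sb0 by (intro mult_left_mono) auto
    finally have "\<theta> * sb \<le> - sa" by simp
    then have "2 * sa + \<theta> * sb < 0" using neg by linarith
    then show False using key[OF th0 th1] by linarith
  qed
  have "frob H r c (Z - Y) (Z - Y) = sm H r c (\<lambda>p a b. u p a b * u p a b + 2 * (u p a b * v p a b) + v p a b * v p a b)"
    unfolding frob_sm u_def v_def by (rule sm_cong) (simp add: algebra_simps)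
  also have "\<dots> = sc + 2 * sa + sb" unfolding sm_add sm_scale sa_def sb_def sc_def by simp
  finally have "frob H r c (Z - Y) (Z - Y) = sc + 2 * sa + sb" .
  moreover have "frob H r c (X - Y) (X - Y) = sb" unfolding frob_sm sb_def v_def by (rule sm_cong) (simp add: algebra_simps)
  moreover have "0 \<le> sc" unfolding sc_def by (rule sm_nonneg) simp
  ultimately show ?thesis using sa0 by linarith
qed


lemma ogd_step:
  assumes pr: "is_proj H r c S (Xo - (\<lambda>p a b. \<eta> * g p a b)) Xn" and Y: "Y \<in> S"
    and cv: "\<And>\<theta>. 0 < \<theta> \<Longrightarrow> \<theta> \<le> 1 \<Longrightarrow> (\<lambda>p a b. Xn p a b + \<theta> * (Y p a b - Xn p a b)) \<in> S"
    and eta: "0 < \<eta>"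
  shows "frob H r c g (Xo - Y) \<le> (frob H r c (Xo - Y) (Xo - Y) - frob H r c (Xn - Y) (Xn - Y)) / (2*\<eta>)
            + \<eta>/2 * frob H r c g g"
proof -
  have P: "frob H r c (Xn - Y) (Xn - Y) \<le> frob H r c ((Xo - (\<lambda>p a b. \<eta> * g p a b)) - Y) ((Xo - (\<lambda>p a b. \<eta> * g p a b)) - Y)"
    by (rule proj_opt[OF pr Y cv])
  have "frob H r c ((Xo - (\<lambda>p a b. \<eta> * g p a b)) - Y) ((Xo - (\<lambda>p a b. \<eta> * g p a b)) - Y)
     = sm H r c (\<lambda>p a b. (Xo p a b - Y p a b) * (Xo p a b - Y p a b) - (2*\<eta>) * (g p a b * (Xo p a b - Y p a b)) + \<eta>^2 * (g p a b * g p a b))"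
    unfolding frob_sm by (rule sm_cong) (simp add: algebra_simps power2_eq_square)
  also have "\<dots> = frob H r c (Xo - Y) (Xo - Y) - 2 * \<eta> * frob H r c g (Xo - Y) + \<eta>^2 * frob H r c g g"
    unfolding sm_add sm_diff sm_scale frob_sm by simp
  finally have "2 * \<eta> * frob H r c g (Xo - Y) \<le> frob H r c (Xo - Y) (Xo - Y) - frob H r c (Xn - Y) (Xn - Y) + \<eta>^2 * frob H r c g g"
    using P by linarith
  then have "frob H r c g (Xo - Y) \<le> (frob H r c (Xo - Y) (Xo - Y) - frob H r c (Xn - Y) (Xn - Y) + \<eta>^2 * frob H r c g g) / (2 * \<eta>)"
    using eta by (simp add: field_simps)
  also have "\<dots> = (frob H r c (Xo - Y) (Xo - Y) - frob H r c (Xn - Y) (Xn - Y)) / (2*\<eta>) + \<eta>/2 * frob H r c g g"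
    using eta by (simp add: field_simps power2_eq_square)
  finally show ?thesis .
qed

lemma proj_move:
  assumes pr: "is_proj H r c S (Xo - (\<lambda>p a b. \<eta> * g p a b)) Xn" and Xo: "Xo \<in> S" and eta: "0 \<le> \<eta>"
  shows "fn H r c (Xn - Xo) \<le> 2 * \<eta> * fn H r c g"
proof -
  define Z where "Z = Xo - (\<lambda>p a b. \<eta> * g p a b)"
  have "frob H r c (Xn - Z) (Xn - Z) \<le> frob H r c (Xo - Z) (Xo - Z)"
    using pr Xo unfolding is_proj_def Z_def by blast
  moreover have "frob H r c (Xo - Z) (Xo - Z) = \<eta>^2 * frob H r c g g"
    unfolding frob_sm Z_def sm_scale[symmetric] by (rule sm_cong) (simp add: power2_eq_square)
  ultimately have "fn H r c (Xn - Z) \<le> sqrt (\<eta>^2 * frob H r c g g)"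
    unfolding fn_def by (intro real_sqrt_le_mono) simp
  also have "\<dots> = \<eta> * fn H r c g" using eta by (simp add: fn_def real_sqrt_mult)
  finally have a: "fn H r c (Xn - Z) \<le> \<eta> * fn H r c g" .
  have "fn H r c (Z - Xo) = fn H r c (Xo - Z)" by (rule fn_sym)
  also have "\<dots> = \<eta> * fn H r c g"
    using \<open>frob H r c (Xo - Z) (Xo - Z) = \<eta>^2 * frob H r c g g\<close> eta by (simp add: fn_def real_sqrt_mult)
  finally have b: "fn H r c (Z - Xo) = \<eta> * fn H r c g" .
  show ?thesis using fn_triangle[of H r c Xn Xo Z] a b by linarith
qed

lemma subgrad_bound:
  assumes sg: "subgrad H r c f X g" and lip: "\<And>Y Y'. f Y - f Y' \<le> Lip * fn H r c (Y - Y')" and L0: "0 \<le> Lip"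
  shows "fn H r c g \<le> Lip"
proof -
  have e: "(X + g) - X = g" by simp
  have "f (X + g) \<ge> f X + frob H r c g g" using sg unfolding subgrad_def by (metis e)
  moreover have "f (X + g) - f X \<le> Lip * fn H r c g" using lip[of "X + g" X] by (simp only: e)
  ultimately have "(fn H r c g)^2 \<le> Lip * fn H r c g" unfolding fn_sq by linarith
  then show ?thesis
    by (metis L0 fn_nonneg le_square mult.commute mult_right_le_imp_le not_le order_less_le power2_eq_square mult_le_cancel_right)
qed

lemma calM_convex:
  assumes X: "X \<in> calM n r H \<kappa> \<gamma>" and Y: "Y \<in> calM n r H \<kappa> \<gamma>" and th: "0 \<le> \<theta>" "\<theta> \<le> 1"
  shows "(\<lambda>p a b. X p a b + \<theta> * (Y p a b - X p a b)) \<in> calM n r H \<kappa> \<gamma>"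
  unfolding calM_def
proof (intro CollectI ballI)
  fix p assume p: "p \<in> {1..H}"
  have "opnorm r n (\<lambda>a b. X (p-1) a b + \<theta> * (Y (p-1) a b - X (p-1) a b)) \<le> (1-\<theta>) * opnorm r n (X (p-1)) + \<theta> * opnorm r n (Y (p-1))"
    by (rule opnorm_convex[OF th])
  also have "\<dots> \<le> (1-\<theta>) * (2 * \<kappa>^2 * (1-\<gamma>)^p) + \<theta> * (2 * \<kappa>^2 * (1-\<gamma>)^p)"
    using X Y p th unfolding calM_def by (intro add_mono mult_left_mono) auto
  also have "\<dots> = 2 * \<kappa>^2 * (1-\<gamma>)^p" by (simp add: algebra_simps)
  finally show "opnorm r n ((\<lambda>p a b. X p a b + \<theta> * (Y p a b - X p a b)) (p - 1)) \<le> 2 * \<kappa>^2 * (1-\<gamma>)^p" by simp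
qed

lemma calM_frob:
  assumes M: "M \<in> calM n r H \<kappa> \<gamma>" and g: "0 < \<gamma>" "\<gamma> \<le> 1"
  shows "frob H r n M M \<le> real H * (real n * (2*\<kappa>^2)^2)"
proof -
  have "frob H r n M M = (\<Sum>p<H. \<Sum>a<r. \<Sum>b<n. (M p a b)^2)" by (simp add: frob_def power2_eq_square)
  also have "\<dots> \<le> (\<Sum>p<H. real n * (2*\<kappa>^2)^2)"
  proof (rule sum_mono)
    fix p assume p: "p \<in> {..<H}"
    have o: "opnorm r n (M p) \<le> 2*\<kappa>^2 * (1-\<gamma>)^(Suc p)" using M p unfolding calM_def by force
    have "(1-\<gamma>)^(Suc p) \<le> 1" using g by (intro power_le_one) auto
    then have "opnorm r n (M p) \<le> 2*\<kappa>^2"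
      using o by (smt (verit, best) mult_left_le zero_le_power2 mult_nonneg_nonneg)
    then have "(opnorm r n (M p))^2 \<le> (2*\<kappa>^2)^2" by (intro power_mono) auto
    then show "(\<Sum>a<r. \<Sum>b<n. (M p a b)^2) \<le> real n * (2*\<kappa>^2)^2"
      using frn_opnorm[where X="M p" and r=r and c=n] by (meson mult_left_mono of_nat_0_le_iff order_trans)
  qed
  finally show ?thesis by simp
qed


locale agl = sysl +
  fixes i :: nat and c :: "nat \<Rightarrow> vec \<Rightarrow> vec \<Rightarrow> real" and P :: "nat \<Rightarrow> nat \<Rightarrow> nat \<Rightarrow> mat"
    and Ms :: "nat \<Rightarrow> mat" and \<eta> Lb :: real
  assumes iN: "i < N" and lipc: "\<And>t. lipschitz_cost n (m i) Lb (c t)" and Lb0: "0 \<le> Lb"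
    and oth: "\<And>j t. j < N \<Longrightarrow> j \<noteq> i \<Longrightarrow> P j t \<in> calM n (m j) H \<kappa> \<gamma>"
    and agc: "agc_run n m N A B K H \<kappa> \<gamma> \<eta> i c w P"
    and Msin: "Ms \<in> calM n (m i) H \<kappa> \<gamma>" and eta: "0 < \<eta>"
begin

definition "Zb = W + real N * (\<beta> * (2*\<kappa>^2*W/\<gamma>))"
definition "Etr = \<kappa> * (1-\<gamma>)^(H+1) * (\<kappa> * Zb / \<gamma>)"
definition "Gam = real ((2*H+1)*(H+1)) * (\<kappa> * (\<beta> * W))"
definition "Lip = Lb * ((1+\<kappa>) * Gam + real H * W)"
definition "ell t M = ideal_loss n m N A B K H P w i c t M"
definition "gg t = (SOME g. subgrad H (m i) n (ell t) (P i t) g \<and>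
   is_proj H (m i) n (calM n (m i) H \<kappa> \<gamma>) (P i t - (\<lambda>p a b. \<eta> * g p a b)) (P i (Suc t)))"

lemma N0: "0 < N" using iN by simp
lemma b0: "0 \<le> \<beta>" using beta0[OF N0] .

lemma gg_prop: "subgrad H (m i) n (ell t) (P i t) (gg t) \<and>
   is_proj H (m i) n (calM n (m i) H \<kappa> \<gamma>) (P i t - (\<lambda>p a b. \<eta> * gg t p a b)) (P i (Suc t))"
proof -
  have "\<exists>g. subgrad H (m i) n (ell t) (P i t) g \<and>
     is_proj H (m i) n (calM n (m i) H \<kappa> \<gamma>) (P i t - (\<lambda>p a b. \<eta> * g p a b)) (P i (Suc t))"
    using agc unfolding agc_run_def ell_def by blast
  then show ?thesis unfolding gg_def by (rule someI_ex)
qed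

lemma Pin: "P i t \<in> calM n (m i) H \<kappa> \<gamma>"
proof (cases t)
  case 0 then show ?thesis using agc unfolding agc_run_def by simp
next
  case (Suc s) then show ?thesis using gg_prop[of s] unfolding is_proj_def by simp
qed

lemma Pall: "j < N \<Longrightarrow> P j s \<in> calM n (m j) H \<kappa> \<gamma>"
  using oth Pin by (cases "j = i") auto

lemma Pupd: "M \<in> calM n (m i) H \<kappa> \<gamma> \<Longrightarrow> j < N \<Longrightarrow> (P(i := (\<lambda>_. M))) j s \<in> calM n (m j) H \<kappa> \<gamma>"
  using Pall by (cases "j = i") auto

lemma Zb0: "0 \<le> Zb" unfolding Zb_def using W0 b0 kap1 gpos by simp

lemma trunc_err:
  assumes t: "H + 1 \<le> t" and Q: "\<And>j s. j < N \<Longrightarrow> Q j s \<in> calM n (m j) H \<kappa> \<gamma>"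
  shows "vnorm n (tr Q t - ideal_state n m N A B K H Q w t) \<le> Etr"
proof -
  have "tr Q t - ideal_state n m N A B K H Q w t = Ap (H+1) (tr Q (t-H-1))"
    unfolding trunc[OF t] ideal_trunc[OF t] by simp
  moreover have "vnorm n (tr Q (t-H-1)) \<le> \<kappa> * Zb / \<gamma>"
    by (rule tr_bound) (unfold Zb_def, rule zin_bound, rule Q)
  moreover have "0 \<le> \<kappa> * (1-\<gamma>)^(H+1)" using kap1 g1 by simp
  ultimately show ?thesis unfolding Etr_def
    using Ap_bound[of "H+1" "tr Q (t-H-1)"] mult_left_mono[of "vnorm n (tr Q (t-H-1))" "\<kappa> * Zb / \<gamma>" "\<kappa> * (1-\<gamma>)^(H+1)"]
    by simp
qed

lemma cost_cmp:
  "c t x (dac_act n H (K i) M w t x) - c t y (dac_act n H (K i) M w t y) \<le> Lb * (1+\<kappa>) * vnorm n (x - y)"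
proof -
  have e: "dac_act n H (K i) M w t x - dac_act n H (K i) M w t y = mv n (K i) (y - x)"
    unfolding dac_act_def mv_minus by (simp add: algebra_simps)
  have "vnorm (m i) (mv n (K i) (y - x)) \<le> \<kappa> * vnorm n (x - y)"
    using ss_K[OF ss iN, of "y - x"] vnorm_diff_sym[of n y x] by simp
  moreover have "\<bar>c t x (dac_act n H (K i) M w t x) - c t y (dac_act n H (K i) M w t y)\<bar>
      \<le> Lb * (vnorm n (x - y) + vnorm (m i) (dac_act n H (K i) M w t x - dac_act n H (K i) M w t y))"
    using lipc[of t] unfolding lipschitz_cost_def by blast
  ultimately have "\<bar>c t x (dac_act n H (K i) M w t x) - c t y (dac_act n H (K i) M w t y)\<bar>
      \<le> Lb * (vnorm n (x - y) + \<kappa> * vnorm n (x - y))"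
    unfolding e using Lb0 by (meson add_left_mono mult_left_mono order_trans)
  then show ?thesis by (simp add: algebra_simps)
qed

end


context agl
begin

lemma Gam0: "0 \<le> Gam" unfolding Gam_def using kap1 b0 W0 by simp
lemma Lip0: "0 \<le> Lip" unfolding Lip_def using Lb0 Gam0 kap1 W0 by simp

lemma ideal_diff_i:
  assumes "\<And>k q. k \<le> H \<Longrightarrow> q < H \<Longrightarrow> frn (m i) n (Q i (t-1-k) q - Q' i (t-1-k) q) \<le> \<delta>"
    and "\<And>j. j \<noteq> i \<Longrightarrow> Q' j = Q j" and "0 \<le> \<delta>"
  shows "vnorm n (ideal_state n m N A B K H Q w t - ideal_state n m N A B K H Q' w t) \<le> Gam * \<delta>"
proof -
  have "vnorm n (ideal_state n m N A B K H Q w t - ideal_state n m N A B K H Q' w t)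
      \<le> real ((2*H+1)*(H+1)) * (\<kappa> * (\<beta> * (\<delta> * W)))"
    using ideal_diff[where i=i and Q=Q and Q'=Q' and \<delta>=\<delta> and t=t] iN assms by blast
  also have "\<dots> = Gam * \<delta>" unfolding Gam_def by (simp add: mult_ac)
  finally show ?thesis .
qed

lemma loss_lip: "ell t M - ell t M' \<le> Lip * fn H (m i) n (M - M')"
proof -
  define \<delta> where "\<delta> = fn H (m i) n (M - M')"
  define y where "y = ideal_state n m N A B K H (P(i := (\<lambda>_. M))) w t"
  define y' where "y' = ideal_state n m N A B K H (P(i := (\<lambda>_. M'))) w t"
  have ell1: "ell t M = c t y (dac_act n H (K i) M w t y)" unfolding ell_def ideal_loss_def y_def Let_def ..
  have ell2: "ell t M' = c t y' (dac_act n H (K i) M' w t y')" unfolding ell_def ideal_loss_def y'_def Let_def ..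
  have d0: "0 \<le> \<delta>" unfolding \<delta>_def by simp
  have yy: "vnorm n (y - y') \<le> Gam * \<delta>"
    unfolding y_def y'_def
  proof (rule ideal_diff_i[OF _ _ d0])
    fix k q assume "k \<le> H" "q < H"
    then show "frn (m i) n ((P(i := (\<lambda>_. M))) i (t-1-k) q - (P(i := (\<lambda>_. M'))) i (t-1-k) q) \<le> \<delta>"
      using frn_le_fn[of q H "m i" n "M - M'"] unfolding \<delta>_def by simp
  qed simp
  have ev: "dac_act n H (K i) M w t y - dac_act n H (K i) M' w t y'
      = mv n (K i) (y' - y) + (\<Sum>p\<in>{1..H}. mv n (M (p-1) - M' (p-1)) (wp w t p))"
    unfolding dac_act_def mv_minus mv_mat_diff sum_subtractf by (simp add: algebra_simps)
  have "\<kappa> * vnorm n (y' - y) \<le> \<kappa> * (Gam * \<delta>)"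
    using yy vnorm_diff_sym[of n y' y] kap1 by (intro mult_left_mono) auto
  then have s1: "vnorm (m i) (mv n (K i) (y' - y)) \<le> \<kappa> * (Gam * \<delta>)"
    using ss_K[OF ss iN, of "y' - y"] by linarith
  have s2: "vnorm (m i) (\<Sum>p\<in>{1..H}. mv n (M (p-1) - M' (p-1)) (wp w t p)) \<le> real H * (\<delta> * W)"
  proof -
    have "vnorm (m i) (\<Sum>p\<in>{1..H}. mv n (M (p-1) - M' (p-1)) (wp w t p))
        \<le> (\<Sum>p\<in>{1..H}. vnorm (m i) (mv n (M (p-1) - M' (p-1)) (wp w t p)))" by (rule vnorm_sum)
    also have "\<dots> \<le> (\<Sum>p\<in>{1..H}. \<delta> * W)"
    proof (rule sum_mono)
      fix p assume p: "p \<in> {1..H}"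
      have pq: "p - 1 < H" using p by auto
      have f: "frn (m i) n (M (p-1) - M' (p-1)) \<le> \<delta>"
        using frn_le_fn[OF pq, of "m i" n "M - M'"] unfolding \<delta>_def by simp
      have "vnorm (m i) (mv n (M (p-1) - M' (p-1)) (wp w t p)) \<le> frn (m i) n (M (p-1) - M' (p-1)) * vnorm n (wp w t p)"
        by (rule mv_frn)
      also have "\<dots> \<le> \<delta> * W" using f wp_bound[of t p] d0 by (intro mult_mono) auto
      finally show "vnorm (m i) (mv n (M (p-1) - M' (p-1)) (wp w t p)) \<le> \<delta> * W" .
    qed
    also have "\<dots> = real H * (\<delta> * W)" by simp
    finally show ?thesis .
  qed
  have vv: "vnorm (m i) (dac_act n H (K i) M w t y - dac_act n H (K i) M' w t y') \<le> \<kappa> * (Gam * \<delta>) + real H * (\<delta> * W)"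
    unfolding ev using vnorm_add[of "m i" "mv n (K i) (y' - y)"] s1 s2 by (meson add_mono order_trans)
  have "\<bar>ell t M - ell t M'\<bar> \<le> Lb * (vnorm n (y - y') + vnorm (m i) (dac_act n H (K i) M w t y - dac_act n H (K i) M' w t y'))"
    unfolding ell1 ell2 using lipc[of t] unfolding lipschitz_cost_def by blast
  also have "\<dots> \<le> Lb * (Gam * \<delta> + (\<kappa> * (Gam * \<delta>) + real H * (\<delta> * W)))"
    using yy vv Lb0 by (intro mult_left_mono add_mono) auto
  also have "\<dots> = Lip * \<delta>" unfolding Lip_def by (simp add: algebra_simps)
  finally show ?thesis unfolding \<delta>_def by simp
qed

lemma gnorm: "fn H (m i) n (gg t) \<le> Lip"
  using subgrad_bound[of H "m i" n "ell t" "P i t" "gg t" Lip] gg_prop[of t] loss_lip Lip0 by blast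

lemma move1: "fn H (m i) n (P i (Suc s) - P i s) \<le> 2 * \<eta> * Lip"
proof -
  have "fn H (m i) n (P i (Suc s) - P i s) \<le> 2 * \<eta> * fn H (m i) n (gg s)"
    using proj_move[of H "m i" n _ "P i s" \<eta> "gg s" "P i (Suc s)"] gg_prop[of s] Pin[of s] eta by auto
  also have "\<dots> \<le> 2 * \<eta> * Lip" using gnorm[of s] eta by simp
  finally show ?thesis .
qed

lemma move: "fn H (m i) n (P i (s + d) - P i s) \<le> real d * (2 * \<eta> * Lip)"
proof (induction d)
  case 0 then show ?case by (simp add: fn_def frob_def)
next
  case (Suc d)
  have e: "s + Suc d = Suc (s + d)" by simp
  have r: "real (Suc d) * (2 * \<eta> * Lip) = 2 * \<eta> * Lip + real d * (2 * \<eta> * Lip)" by (simp add: algebra_simps)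
  have "fn H (m i) n (P i (Suc (s + d)) - P i s) \<le> fn H (m i) n (P i (Suc (s + d)) - P i (s + d)) + fn H (m i) n (P i (s + d) - P i s)"
    by (rule fn_triangle)
  also have "\<dots> \<le> 2 * \<eta> * Lip + real d * (2 * \<eta> * Lip)" using move1 Suc.IH by (rule add_mono)
  finally show ?case unfolding e r .
qed

end


lemma frob_neg: "frob H r c g (X - Y) = - frob H r c g (Y - X)"
proof -
  have "frob H r c g (X - Y) = sm H r c (\<lambda>p a b. (-1) * (g p a b * (Y - X) p a b))"
    unfolding frob_sm by (rule sm_cong) (simp add: algebra_simps)
  then show ?thesis unfolding sm_scale frob_sm by simp
qed

context agl
begin

definition "dm = real (H+1) * (2 * \<eta> * Lip)"
definition "DD t = frob H (m i) n (P i t - Ms) (P i t - Ms)"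

lemma Etr0: "0 \<le> Etr" unfolding Etr_def using kap1 g1 gpos Zb0 by simp
lemma dm0: "0 \<le> dm" unfolding dm_def using eta Lip0 by simp

lemma claim1:
  assumes t: "H + 1 \<le> t"
  shows "c t (tr P t) (dac_act n H (K i) (P i t) w t (tr P t)) - ell t (P i t) \<le> Lb * (1+\<kappa>) * (Etr + Gam * dm)"
proof -
  define y where "y = ideal_state n m N A B K H P w t"
  define yh where "yh = ideal_state n m N A B K H (P(i := (\<lambda>_. P i t))) w t"
  have e: "ell t (P i t) = c t yh (dac_act n H (K i) (P i t) w t yh)"
    unfolding ell_def ideal_loss_def yh_def Let_def ..
  have a: "vnorm n (tr P t - y) \<le> Etr" unfolding y_def by (rule trunc_err[OF t Pall])
  have b: "vnorm n (y - yh) \<le> Gam * dm"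
    unfolding y_def yh_def
  proof (rule ideal_diff_i[OF _ _ dm0])
    fix k q assume k: "k \<le> H" and q: "q < H"
    define s where "s = t - 1 - k"
    have st: "s + (k + 1) = t" unfolding s_def using k t by simp
    have "frn (m i) n ((P i s - P i t) q) \<le> fn H (m i) n (P i s - P i t)" by (rule frn_le_fn[OF q])
    also have "\<dots> = fn H (m i) n (P i (s + (k+1)) - P i s)" unfolding st by (rule fn_sym)
    also have "\<dots> \<le> real (k+1) * (2 * \<eta> * Lip)" by (rule move)
    also have "\<dots> \<le> dm" unfolding dm_def using k eta Lip0 by (intro mult_right_mono) auto
    finally show "frn (m i) n (P i (t - 1 - k) q - (P(i := (\<lambda>_. P i t))) i (t - 1 - k) q) \<le> dm"
      unfolding s_def by simp
  qed simp
  have "c t (tr P t) (dac_act n H (K i) (P i t) w t (tr P t)) - ell t (P i t) \<le> Lb * (1+\<kappa>) * vnorm n (tr P t - yh)"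
    unfolding e by (rule cost_cmp)
  also have "\<dots> \<le> Lb * (1+\<kappa>) * (Etr + Gam * dm)"
    using vnorm_triangle[of n "tr P t" yh y] a b Lb0 kap1 by (intro mult_left_mono) auto
  finally show ?thesis .
qed

lemma claim2:
  assumes t: "H + 1 \<le> t"
  shows "ell t Ms - c t (tr (P(i := (\<lambda>_. Ms))) t) (dac_act n H (K i) Ms w t (tr (P(i := (\<lambda>_. Ms))) t)) \<le> Lb * (1+\<kappa>) * Etr"
proof -
  define ys where "ys = ideal_state n m N A B K H (P(i := (\<lambda>_. Ms))) w t"
  have e: "ell t Ms = c t ys (dac_act n H (K i) Ms w t ys)"
    unfolding ell_def ideal_loss_def ys_def Let_def ..
  have a: "vnorm n (tr (P(i := (\<lambda>_. Ms))) t - ys) \<le> Etr"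
    unfolding ys_def by (rule trunc_err[OF t Pupd[OF Msin]])
  have "ell t Ms - c t (tr (P(i := (\<lambda>_. Ms))) t) (dac_act n H (K i) Ms w t (tr (P(i := (\<lambda>_. Ms))) t))
      \<le> Lb * (1+\<kappa>) * vnorm n (ys - tr (P(i := (\<lambda>_. Ms))) t)"
    unfolding e by (rule cost_cmp)
  also have "\<dots> \<le> Lb * (1+\<kappa>) * Etr"
    using a vnorm_diff_sym[of n ys] Lb0 kap1 by (intro mult_left_mono) auto
  finally show ?thesis .
qed

lemma claim3: "ell t (P i t) - ell t Ms \<le> (DD t - DD (Suc t)) / (2*\<eta>) + \<eta>/2 * Lip^2"
proof -
  have sg: "subgrad H (m i) n (ell t) (P i t) (gg t)" and pr: "is_proj H (m i) n (calM n (m i) H \<kappa> \<gamma>) (P i t - (\<lambda>p a b. \<eta> * gg t p a b)) (P i (Suc t))"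
    using gg_prop[of t] by auto
  have "ell t Ms \<ge> ell t (P i t) + frob H (m i) n (gg t) (Ms - P i t)" using sg unfolding subgrad_def by blast
  then have "ell t (P i t) - ell t Ms \<le> frob H (m i) n (gg t) (P i t - Ms)"
    using frob_neg[of H "m i" n "gg t" Ms "P i t"] by linarith
  also have "\<dots> \<le> (DD t - DD (Suc t)) / (2*\<eta>) + \<eta>/2 * frob H (m i) n (gg t) (gg t)"
    unfolding DD_def
    by (rule ogd_step[OF pr Msin _ eta]) (rule calM_convex[OF Pin Msin], auto)
  also have "frob H (m i) n (gg t) (gg t) \<le> Lip^2"
    using gnorm[of t] unfolding fn_sq[symmetric] by (intro power_mono) auto
  then have "\<eta>/2 * frob H (m i) n (gg t) (gg t) \<le> \<eta>/2 * Lip^2" using eta by (intro mult_left_mono) auto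
  finally show ?thesis by simp
qed

lemma DD_bound: "DD t \<le> 4 * (real H * (real n * (2*\<kappa>^2)^2))"
proof -
  define Dc where "Dc = real H * (real n * (2*\<kappa>^2)^2)"
  have fb: "fn H (m i) n X \<le> sqrt Dc" if "X \<in> calM n (m i) H \<kappa> \<gamma>" for X
    unfolding fn_def Dc_def using calM_frob[OF that gpos g1] by (rule real_sqrt_le_mono)
  have "fn H (m i) n (P i t - Ms) \<le> fn H (m i) n (P i t - 0) + fn H (m i) n (0 - Ms)" by (rule fn_triangle)
  also have "fn H (m i) n (0 - Ms) = fn H (m i) n (Ms - 0)" by (rule fn_sym)
  also have "fn H (m i) n (P i t - 0) + fn H (m i) n (Ms - 0) \<le> 2 * sqrt Dc"
    using fb[OF Pin[of t]] fb[OF Msin] by simp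
  finally have f: "fn H (m i) n (P i t - Ms) \<le> 2 * sqrt Dc" .
  have "DD t = (fn H (m i) n (P i t - Ms))^2" unfolding DD_def fn_sq ..
  also have "\<dots> \<le> (2 * sqrt Dc)^2" using f by (intro power_mono) auto
  also have "\<dots> = 4 * Dc" unfolding Dc_def using kap1 by (simp add: power_mult_distrib)
  finally show ?thesis unfolding Dc_def .
qed

lemma DD0: "0 \<le> DD t" unfolding DD_def by (rule frob_self_nonneg)

theorem regret_locale:
  assumes T: "H + 1 \<le> T"
  shows "regret_vs n m N A B K H P w i c T Ms
    \<le> real T * (Lb * (1+\<kappa>) * (2 * Etr + Gam * dm) + \<eta>/2 * Lip^2) + 4 * (real H * (real n * (2*\<kappa>^2)^2)) / (2*\<eta>)"
proof -
  define a where "a t = c t (tr P t) (dac_act n H (K i) (P i t) w t (tr P t))" for t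
  define b where "b t = c t (tr (P(i := (\<lambda>_. Ms))) t) (dac_act n H (K i) Ms w t (tr (P(i := (\<lambda>_. Ms))) t))" for t
  define C where "C = Lb * (1+\<kappa>) * (2 * Etr + Gam * dm) + \<eta>/2 * Lip^2"
  have C0: "0 \<le> C" unfolding C_def using Lb0 kap1 Etr0 Gam0 dm0 eta by simp
  have st: "a t - b t \<le> C + (DD t - DD (Suc t)) / (2*\<eta>)" if "t \<in> {H+1..T}" for t
  proof -
    have t: "H + 1 \<le> t" using that by simp
    have "a t - b t = (a t - ell t (P i t)) + (ell t (P i t) - ell t Ms) + (ell t Ms - b t)" by simp
    also have "\<dots> \<le> Lb * (1+\<kappa>) * (Etr + Gam * dm) + ((DD t - DD (Suc t)) / (2*\<eta>) + \<eta>/2 * Lip^2) + Lb * (1+\<kappa>) * Etr"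
      unfolding a_def b_def using claim1[OF t] claim2[OF t] claim3[of t] by (intro add_mono)
    also have "\<dots> = C + (DD t - DD (Suc t)) / (2*\<eta>)" unfolding C_def by (simp add: algebra_simps)
    finally show ?thesis .
  qed
  have "regret_vs n m N A B K H P w i c T Ms = (\<Sum>t\<in>{H+1..T}. a t - b t)"
    unfolding regret_vs_def a_def b_def sum_subtractf ..
  also have "\<dots> \<le> (\<Sum>t\<in>{H+1..T}. C + (DD t - DD (Suc t)) / (2*\<eta>))" by (rule sum_mono) (rule st)
  also have "\<dots> = real (card {H+1..T}) * C + (\<Sum>t\<in>{H+1..T}. DD t - DD (Suc t)) / (2*\<eta>)"
    by (simp add: sum.distrib sum_divide_distrib)
  also have "(\<Sum>t\<in>{H+1..T}. DD t - DD (Suc t)) = DD (H+1) - DD (Suc T)"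
  proof -
    have "(\<Sum>t\<in>{H+1..T}. DD (Suc t) - DD t) = DD (Suc T) - DD (H+1)" using T by (intro sum_Suc_diff) simp
    then show ?thesis by (simp add: sum_subtractf)
  qed
  also have "real (card {H+1..T}) * C \<le> real T * C" using C0 by (intro mult_right_mono) auto
  also have "(DD (H+1) - DD (Suc T)) / (2*\<eta>) \<le> 4 * (real H * (real n * (2*\<kappa>^2)^2)) / (2*\<eta>)"
    using DD_bound[of "H+1"] DD0[of "Suc T"] eta by (intro divide_right_mono) auto
  finally show ?thesis unfolding C_def by simp
qed

end


lemma upow: "1 \<le> (u::real) \<Longrightarrow> i \<le> j \<Longrightarrow> u^i \<le> u^j"
  by (rule power_increasing)

lemma phi_bound:
  fixes u W \<gamma> \<kappa> \<beta> Lb nn h :: real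
  assumes u1: "1 \<le> u" and W: "0 \<le> W" "W \<le> u" and g: "0 < \<gamma>" "1/\<gamma> \<le> u"
    and k: "0 \<le> \<kappa>" "\<kappa> \<le> u" and b: "0 \<le> \<beta>" "\<beta> \<le> u" and L: "0 \<le> Lb" "Lb \<le> u"
    and nn: "0 \<le> nn" "nn \<le> u" and h: "0 \<le> h" "h \<le> u"
  defines "Gam \<equiv> (2*h+1)*(h+1) * (\<kappa> * (\<beta> * W))"
  defines "Lip \<equiv> Lb * ((1+\<kappa>) * Gam + h * W)"
  defines "E0 \<equiv> \<kappa> * (W + \<beta> * (2*\<kappa>^2*W/\<gamma>)) / (2*\<gamma>)"
  shows "Lb*(1+\<kappa>)*2*E0 + Lb*(1+\<kappa>)*Gam*((h+1)*(2*Lip)) + Lip^2/2 + 4*(h*(nn*(2*\<kappa>^2)^2))/2 \<le> 1000 * u^15"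
proof -
  have u0: "0 \<le> u" using u1 by simp
  have ig: "0 \<le> 1/\<gamma>" using g by simp
  have k1: "1 + \<kappa> \<le> 2*u" using k u1 by simp
  have k10: "0 \<le> 1 + \<kappa>" using k by simp
  have hh: "(2*h+1)*(h+1) \<le> (3*u)*(2*u)" using h u1 by (intro mult_mono') auto
  have kbw: "\<kappa> * (\<beta> * W) \<le> u * (u * u)" using k b W by (intro mult_mono') (auto intro: mult_nonneg_nonneg)
  have G0: "0 \<le> Gam" unfolding Gam_def using h k b W by simp
  have G: "Gam \<le> 6 * u^5"
  proof -
    have "Gam \<le> ((3*u)*(2*u)) * (u * (u * u))" unfolding Gam_def
      by (rule mult_mono'[OF hh kbw]) (use h k b W in auto)
    also have "\<dots> = 6 * u^5" by (simp add: power_def numeral_eq_Suc algebra_simps)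
    finally show ?thesis .
  qed
  have kG: "(1+\<kappa>) * Gam \<le> (2*u) * (6*u^5)" using k1 G k10 G0 by (intro mult_mono') auto
  have hW: "h * W \<le> u * u" using h W by (intro mult_mono') auto
  have "(2*u) * (6*u^5) = 12 * u^6" by (simp add: power_def numeral_eq_Suc algebra_simps)
  moreover have "u * u \<le> u^6" using upow[OF u1, of 2 6] by (simp add: power2_eq_square)
  ultimately have in1: "(1+\<kappa>) * Gam + h * W \<le> 13 * u^6" using kG hW by linarith
  have in10: "0 \<le> (1+\<kappa>) * Gam + h * W" using k10 G0 h W by simp
  have Lip0: "0 \<le> Lip" unfolding Lip_def using L in10 by simp
  have Lp: "Lip \<le> 13 * u^7"
  proof -
    have "Lip \<le> u * (13 * u^6)" unfolding Lip_def using L in1 in10 by (intro mult_mono') auto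
    also have "\<dots> = 13 * u^7" by (simp add: power_def numeral_eq_Suc algebra_simps)
    finally show ?thesis .
  qed
  have inner: "W + \<beta> * (2*\<kappa>^2*W/\<gamma>) \<le> 3 * u^5"
  proof -
    have "\<beta> * (2*\<kappa>^2*W/\<gamma>) = 2 * (\<beta> * (\<kappa>^2 * (W * (1/\<gamma>))))" by simp
    also have "\<dots> \<le> 2 * (u * (u^2 * (u * u)))"
      using b k W g ig by (intro mult_left_mono mult_mono' power_mono) (auto intro: mult_nonneg_nonneg)
    also have "\<dots> = 2 * u^5" by (simp add: power_def numeral_eq_Suc algebra_simps)
    finally have "\<beta> * (2*\<kappa>^2*W/\<gamma>) \<le> 2 * u^5" .
    moreover have "W \<le> u^5" using W upow[OF u1, of 1 5] by simp
    ultimately show ?thesis by linarith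
  qed
  have inner0: "0 \<le> W + \<beta> * (2*\<kappa>^2*W/\<gamma>)" using W b g by simp
  have E0b: "E0 \<le> u * (3 * u^5) * u / 2"
  proof -
    have "E0 = \<kappa> * (W + \<beta> * (2*\<kappa>^2*W/\<gamma>)) * (1/\<gamma>) / 2" unfolding E0_def by simp
    also have "\<dots> \<le> u * (3 * u^5) * u / 2"
      using k inner inner0 g ig by (intro divide_right_mono mult_mono') (auto intro: mult_nonneg_nonneg)
    finally show ?thesis .
  qed
  have E00: "0 \<le> E0" unfolding E0_def using k inner0 g by simp
  have t1: "Lb*(1+\<kappa>)*2*E0 \<le> 6 * u^15"
  proof -
    have "Lb*(1+\<kappa>)*2*E0 \<le> u*(2*u)*2*(u * (3 * u^5) * u / 2)"
      using L k1 k10 E0b E00 by (intro mult_mono') (auto intro: mult_nonneg_nonneg)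
    also have "\<dots> = 6 * u^9" by (simp add: power_def numeral_eq_Suc algebra_simps)
    also have "\<dots> \<le> 6 * u^15" using upow[OF u1, of 9 15] by simp
    finally show ?thesis .
  qed
  have t2: "Lb*(1+\<kappa>)*Gam*((h+1)*(2*Lip)) \<le> 624 * u^15"
  proof -
    have h1: "h+1 \<le> 2*u" using h u1 by simp
    have l2: "2*Lip \<le> 2*(13*u^7)" using Lp by simp
    have hl: "(h+1)*(2*Lip) \<le> (2*u)*(2*(13*u^7))" by (rule mult_mono'[OF h1 l2]) (use h Lip0 in auto)
    have hl0: "0 \<le> (h+1)*(2*Lip)" using h Lip0 by simp
    have a1: "Lb*(1+\<kappa>) \<le> u*(2*u)" by (rule mult_mono'[OF L(2) k1]) (use L k10 in auto)
    have a2: "Lb*(1+\<kappa>)*Gam \<le> u*(2*u)*(6*u^5)" by (rule mult_mono'[OF a1 G]) (use L k10 G0 in auto)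
    have "Lb*(1+\<kappa>)*Gam*((h+1)*(2*Lip)) \<le> u*(2*u)*(6*u^5)*((2*u)*(2*(13*u^7)))"
      by (rule mult_mono'[OF a2 hl]) (use L k10 G0 hl0 in auto)
    also have "\<dots> = 624 * u^15" by (simp add: power_def numeral_eq_Suc algebra_simps)
    finally show ?thesis .
  qed
  have t3: "Lip^2/2 \<le> 85 * u^15"
  proof -
    have "Lip^2 \<le> (13 * u^7)^2" using Lp Lip0 by (intro power_mono) auto
    also have "\<dots> = 169 * u^14" by (simp add: power_def numeral_eq_Suc algebra_simps)
    also have "\<dots> \<le> 169 * u^15" using upow[OF u1, of 14 15] by simp
    finally have "Lip^2 \<le> 169 * u^15" .
    moreover have "0 \<le> u^15" using u0 by simp
    ultimately show ?thesis by linarith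
  qed
  have t4: "4*(h*(nn*(2*\<kappa>^2)^2))/2 \<le> 8 * u^15"
  proof -
    have "h*(nn*(2*\<kappa>^2)^2) \<le> u*(u*(2*u^2)^2)"
      using h nn k by (intro mult_mono' power_mono mult_left_mono) (auto intro: mult_nonneg_nonneg)
    also have "\<dots> = 4 * u^6" by (simp add: power_def numeral_eq_Suc algebra_simps)
    also have "\<dots> \<le> 4 * u^15" using upow[OF u1, of 6 15] by simp
    finally show ?thesis by simp
  qed
  have "0 \<le> u^15" using u0 by simp
  then show ?thesis using t1 t2 t3 t4 by linarith
qed


lemma Hrho:
  assumes g: "0 < \<gamma>" "\<gamma> \<le> 1" and k: "1 \<le> \<kappa>" and N: "1 \<le> N" and T: "1 \<le> T"
  shows "(1-\<gamma>)^(Hpar \<kappa> \<gamma> N T) \<le> 1 / (2 * \<kappa> * real N * sqrt (real T))"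
proof -
  define y where "y = 2 * \<kappa> * real N * sqrt (real T)"
  have y0: "0 < y" unfolding y_def using k N T by simp
  define H where "H = Hpar \<kappa> \<gamma> N T"
  have Hge: "ln y / \<gamma> \<le> real H" unfolding H_def Hpar_def y_def by (rule real_nat_ceiling_ge)
  then have gH: "ln y \<le> real H * \<gamma>" using g by (simp add: field_simps)
  have "(1-\<gamma>)^H \<le> exp (-\<gamma>)^H"
    using g exp_ge_add_one_self[of "-\<gamma>"] by (intro power_mono) auto
  also have "\<dots> = exp (real H * (-\<gamma>))" by (rule exp_of_nat_mult[symmetric])
  also have "\<dots> \<le> exp (- ln y)" using gH by simp
  also have "\<dots> = 1 / y" using y0 by (simp add: exp_minus inverse_eq_divide)
  finally show ?thesis unfolding H_def y_def .
qed

lemma Hbound: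
  assumes g: "0 < \<gamma>" and k: "1 \<le> \<kappa>" and N: "1 \<le> N" and T: "1 \<le> T"
    and S: "\<kappa> \<le> S" "1/\<gamma> \<le> S" "1 \<le> S"
  shows "real (Hpar \<kappa> \<gamma> N T) \<le> 3 * S^2 * (1 + ln (real N * real T))"
proof -
  define \<Lambda> where "\<Lambda> = 1 + ln (real N * real T)"
  have NT: "1 \<le> real N * real T" using mult_mono'[of 1 "real N" 1 "real T"] N T by simp
  have L1: "1 \<le> \<Lambda>" unfolding \<Lambda>_def using NT by simp
  have lnT: "0 \<le> ln (real T)" using T by simp
  have "ln (2 * \<kappa> * real N * sqrt (real T)) = ln 2 + ln \<kappa> + ln (real N) + ln (sqrt (real T))"
    using k N T by (simp add: ln_mult)
  also have "ln (sqrt (real T)) = ln (real T) / 2" by (simp add: ln_sqrt)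
  also have "ln 2 + ln \<kappa> + ln (real N) + ln (real T) / 2 \<le> 1 + (\<kappa> - 1) + ln (real N) + ln (real T)"
    using ln_le_minus_one[of 2] ln_le_minus_one[of \<kappa>] k lnT by simp
  also have "\<dots> = \<kappa> + (\<Lambda> - 1)" unfolding \<Lambda>_def using N T by (simp add: ln_mult)
  also have "\<dots> \<le> 2 * S * \<Lambda>"
  proof -
    have "S * 1 \<le> S * \<Lambda>" using S L1 by (intro mult_left_mono) auto
    then have "\<kappa> \<le> S * \<Lambda>" using S by linarith
    moreover have "\<Lambda> \<le> S * \<Lambda>" using S L1 by simp
    ultimately show ?thesis by linarith
  qed
  finally have ly: "ln (2 * \<kappa> * real N * sqrt (real T)) \<le> 2 * S * \<Lambda>" .
  have a1: "1 \<le> 2 * \<kappa> * real N" using mult_mono'[of 1 "2*\<kappa>" 1 "real N"] k N by simp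
  have "1 \<le> 2 * \<kappa> * real N * sqrt (real T)" using mult_mono'[OF a1, of 1 "sqrt (real T)"] T by simp
  then have ly0: "0 \<le> ln (2 * \<kappa> * real N * sqrt (real T))" by simp
  define x where "x = ln (2 * \<kappa> * real N * sqrt (real T)) / \<gamma>"
  have x0: "0 \<le> x" unfolding x_def using ly0 g by simp
  have "x = ln (2 * \<kappa> * real N * sqrt (real T)) * (1/\<gamma>)" unfolding x_def by simp
  also have "\<dots> \<le> (2 * S * \<Lambda>) * S" using ly ly0 S g by (intro mult_mono) auto
  finally have xb: "x \<le> 2 * S^2 * \<Lambda>" by (simp add: power2_eq_square mult_ac)
  have "real (Hpar \<kappa> \<gamma> N T) = of_int \<lceil>x\<rceil>" unfolding Hpar_def x_def[symmetric] using x0 by simp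
  also have "\<dots> \<le> x + 1" by (rule of_int_ceiling_le_add_one)
  also have "\<dots> \<le> 2 * S^2 * \<Lambda> + S^2 * \<Lambda>"
  proof -
    have "1 \<le> S^2" using S by simp
    then have "1 \<le> S^2 * \<Lambda>" using L1 mult_mono'[of 1 "S^2" 1 \<Lambda>] by simp
    then show ?thesis using xb by linarith
  qed
  finally show ?thesis unfolding \<Lambda>_def by simp
qed


lemma final_bound:
  fixes W \<gamma> \<kappa> \<beta> Lb :: real and d N n :: nat and m :: "nat \<Rightarrow> nat" and A :: mat and B K :: "nat \<Rightarrow> mat"
    and i :: nat and c :: "nat \<Rightarrow> vec \<Rightarrow> vec \<Rightarrow> real" and w :: "nat \<Rightarrow> vec"
    and P :: "nat \<Rightarrow> nat \<Rightarrow> nat \<Rightarrow> mat" and T :: nat and Ms :: "nat \<Rightarrow> mat" and H :: nat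
  assumes W0: "W \<ge> 0" and gpos: "\<gamma> > 0" and k1: "\<kappa> \<ge> 1" and b0: "\<beta> \<ge> 0" and Lbp: "Lb > 0"
    and Hd: "H = Hpar \<kappa> \<gamma> N T"
    and iN: "i < N" and nd: "n \<le> d"
    and beta: "\<beta> = Max ((\<lambda>j. opnorm n (m j) (B j)) ` {..<N})"
    and ss: "glob_strongly_stable n m N A B K \<kappa> \<gamma>"
    and lipc: "\<forall>t. convex_cost (c t) \<and> lipschitz_cost n (m i) Lb (c t)"
    and wb: "\<forall>t. vnorm n (w t) \<le> W"
    and T: "H + 1 \<le> T"
    and oth: "\<forall>j<N. j \<noteq> i \<longrightarrow> (\<forall>t. P j t \<in> calM n (m j) H \<kappa> \<gamma>)"
    and agc: "agc_run n m N A B K H \<kappa> \<gamma> (1 / sqrt (real T)) i c w P"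
    and Msin: "Ms \<in> calM n (m i) H \<kappa> \<gamma>"
  shows "regret_vs n m N A B K H P w i c T Ms
     \<le> (1000 * 4^15 * (1 + W + 1/\<gamma> + \<kappa> + \<beta> + Lb + real d)^30) * sqrt (real T) * (1 + ln (real N * real T)) powr 15"
proof -
  define S where "S = 1 + W + 1/\<gamma> + \<kappa> + \<beta> + Lb + real d"
  define \<Lambda> where "\<Lambda> = 1 + ln (real N * real T)"
  define sT where "sT = sqrt (real T)"
  define \<eta> where "\<eta> = 1 / sT"
  have T1: "1 \<le> T" using T by simp
  have sT0: "0 < sT" unfolding sT_def using T1 by simp
  have TsT: "real T = sT * sT" unfolding sT_def by simp
  have N1: "1 \<le> N" using iN by simp
  have bb: "opnorm n (m j) (B j) \<le> \<beta>" if "j < N" for j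
    unfolding beta using that by (intro Max_ge) auto
  interpret agl n m N A B K H w \<kappa> \<gamma> W \<beta> i c P Ms \<eta> Lb
  proof (unfold_locales)
    show "glob_strongly_stable n m N A B K \<kappa> \<gamma>" by (rule ss)
    show "0 < \<eta>" unfolding \<eta>_def using sT0 by simp
    show "agc_run n m N A B K H \<kappa> \<gamma> \<eta> i c w P" using agc unfolding \<eta>_def sT_def .
  qed (use gpos k1 wb bb iN lipc oth Msin Lbp in auto)
  have R: "regret_vs n m N A B K H P w i c T Ms
    \<le> real T * (Lb * (1+\<kappa>) * (2 * Etr + Gam * dm) + \<eta>/2 * Lip^2) + 4 * (real H * (real n * (2*\<kappa>^2)^2)) / (2*\<eta>)"
    by (rule regret_locale[OF T])
  define E0 where "E0 = \<kappa> * (W + \<beta> * (2*\<kappa>^2*W/\<gamma>)) / (2*\<gamma>)"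
  have TE: "real T * Etr \<le> sT * E0"
  proof -
    have r1: "(1-\<gamma>)^(H+1) \<le> (1-\<gamma>)^H" using gpos g1 by (intro power_decreasing) auto
    have r2: "(1-\<gamma>)^H \<le> 1 / (2 * \<kappa> * real N * sT)" unfolding Hd sT_def by (rule Hrho[OF gpos g1 k1 N1 T1])
    have "Etr \<le> \<kappa> * (1 / (2 * \<kappa> * real N * sT)) * (\<kappa> * Zb / \<gamma>)"
      unfolding Etr_def using r1 r2 k1 Zb0 gpos by (intro mult_right_mono mult_left_mono) auto
    then have "real T * Etr \<le> real T * (\<kappa> * (1 / (2 * \<kappa> * real N * sT)) * (\<kappa> * Zb / \<gamma>))"
      by (intro mult_left_mono) auto
    also have "\<dots> = sT * (\<kappa> * (Zb / real N) / (2*\<gamma>))"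
      unfolding TsT using sT0 k1 N1 gpos by (simp add: field_simps)
    also have "\<dots> \<le> sT * E0"
    proof -
      have "Zb / real N = W / real N + \<beta> * (2*\<kappa>^2*W/\<gamma>)" unfolding Zb_def using N1 by (simp add: field_simps)
      also have "W / real N \<le> W" using W0 N1 by (simp add: divide_le_eq mult_le_cancel_left1 order_trans)
      finally have "Zb / real N \<le> W + \<beta> * (2*\<kappa>^2*W/\<gamma>)" by simp
      then have "\<kappa> * (Zb / real N) / (2*\<gamma>) \<le> E0" unfolding E0_def using k1 gpos
        by (intro divide_right_mono mult_left_mono) auto
      then show ?thesis using sT0 by (intro mult_left_mono) auto
    qed
    finally show ?thesis .
  qed
  define \<Phi> where "\<Phi> = Lb*(1+\<kappa>)*2*E0 + Lb*(1+\<kappa>)*Gam*((real H+1)*(2*Lip)) + Lip^2/2 + 4*(real H*(real n*(2*\<kappa>^2)^2))/2"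
  have eqR: "real T * (Lb * (1+\<kappa>) * (2 * Etr + Gam * dm) + \<eta>/2 * Lip^2) + 4 * (real H * (real n * (2*\<kappa>^2)^2)) / (2*\<eta>)
     = Lb*(1+\<kappa>)*2*(real T * Etr) + sT * (Lb*(1+\<kappa>)*Gam*((real H+1)*(2*Lip)) + Lip^2/2 + 4*(real H*(real n*(2*\<kappa>^2)^2))/2)"
  proof -
    have dmq: "dm = real (H+1) * (2 * \<eta> * Lip)" by (rule dm_def)
    show ?thesis unfolding dmq unfolding \<eta>_def TsT using sT0 by (simp add: field_simps)
  qed
  have R2: "regret_vs n m N A B K H P w i c T Ms \<le> sT * \<Phi>"
  proof -
    have "Lb*(1+\<kappa>)*2*(real T * Etr) \<le> Lb*(1+\<kappa>)*2*(sT * E0)" using TE Lbp k1 by (intro mult_left_mono) auto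
    then show ?thesis using R unfolding eqR \<Phi>_def by (simp add: algebra_simps)
  qed
  define u where "u = 4 * S^2 * \<Lambda>"
  have S1: "1 \<le> S" unfolding S_def using W0 gpos k1 b0 Lbp by simp
  have NT: "1 \<le> real N * real T" using mult_mono'[of 1 "real N" 1 "real T"] N1 T1 by simp
  have L1: "1 \<le> \<Lambda>" unfolding \<Lambda>_def using NT by simp
  have S2: "S \<le> S^2" using S1 by (simp add: power2_eq_square)
  have Su: "S \<le> u"
  proof -
    have "S^2 * 1 \<le> S^2 * \<Lambda>" using L1 by (intro mult_left_mono) auto
    then have "S^2 \<le> S^2 * \<Lambda>" by simp
    moreover have "0 \<le> S^2 * \<Lambda>" using L1 by simp
    ultimately show ?thesis unfolding u_def using S2 S1 by linarith
  qed
  have u1: "1 \<le> u" using S1 Su by simp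
  have Hu: "real H \<le> u"
  proof -
    have "real H \<le> 3 * S^2 * \<Lambda>" unfolding Hd \<Lambda>_def
      by (rule Hbound[OF gpos k1 N1 T1]) (use S_def W0 gpos k1 b0 Lbp in auto)
    also have "\<dots> \<le> u" unfolding u_def using S1 L1 by (intro mult_right_mono) auto
    finally show ?thesis .
  qed
  have Phi: "\<Phi> \<le> 1000 * u^15"
  proof -
    have gi: "1/\<gamma> \<le> u" using Su unfolding S_def using W0 gpos k1 b0 Lbp by simp
    have "Gam = (2*real H+1)*(real H+1) * (\<kappa> * (\<beta> * W))" unfolding Gam_def by (simp add: algebra_simps)
    moreover have "Lip = Lb * ((1+\<kappa>) * Gam + real H * W)" unfolding Lip_def ..
    ultimately show ?thesis unfolding \<Phi>_def E0_def
    proof (simp only:)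
      have ig0: "0 \<le> 1/\<gamma>" using gpos by simp
      have ndr: "real n \<le> real d" using nd by simp
      have d0: "0 \<le> real d" by simp
      have Wu: "W \<le> u" and ku: "\<kappa> \<le> u" and bu: "\<beta> \<le> u" and Lu: "Lb \<le> u" and nu: "real n \<le> u"
        using Su ig0 ndr d0 W0 b0 Lbp k1 unfolding S_def by linarith+
      show "Lb * (1 + \<kappa>) * 2 * (\<kappa> * (W + \<beta> * (2 * \<kappa>^2 * W / \<gamma>)) / (2 * \<gamma>)) +
        Lb * (1 + \<kappa>) * ((2 * real H + 1) * (real H + 1) * (\<kappa> * (\<beta> * W))) *
        ((real H + 1) * (2 * (Lb * ((1 + \<kappa>) * ((2 * real H + 1) * (real H + 1) * (\<kappa> * (\<beta> * W))) + real H * W)))) +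
        (Lb * ((1 + \<kappa>) * ((2 * real H + 1) * (real H + 1) * (\<kappa> * (\<beta> * W))) + real H * W))^2 / 2 +
        4 * (real H * (real n * (2 * \<kappa>^2)^2)) / 2 \<le> 1000 * u^15"
        by (rule phi_bound[where u=u and W=W and \<gamma>=\<gamma> and \<kappa>=\<kappa> and \<beta>=\<beta> and Lb=Lb and nn="real n" and h="real H"])
           (use u1 W0 gpos gi Hu b0 Lbp k1 Wu ku bu Lu nu in auto)
    qed
  qed
  have up: "u^15 = 4^15 * S^30 * \<Lambda>^15" unfolding u_def by (simp add: power_mult_distrib power_mult[symmetric])
  have "regret_vs n m N A B K H P w i c T Ms \<le> sT * (1000 * u^15)"
    using R2 Phi sT0 by (meson mult_left_mono less_imp_le order_trans)
  also have "\<dots> = (1000 * 4^15 * S^30) * sT * \<Lambda>^15" unfolding up by (simp add: mult_ac)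
  also have "\<Lambda>^15 = \<Lambda> powr 15" using L1 by (simp add: powr_numeral)
  finally show ?thesis unfolding S_def sT_def \<Lambda>_def .
qed


theorem theorem4:
  shows "\<exists>ce Kc :: real. \<exists>k :: nat. ce \<ge> 0 \<and>
    (\<forall>(W::real) (\<gamma>::real) (\<kappa>::real) (\<beta>::real) (Lb::real) (d::nat).
       W \<ge> 0 \<and> \<gamma> > 0 \<and> \<kappa> \<ge> 1 \<and> \<beta> \<ge> 0 \<and> Lb > 0 \<longrightarrow>
       (\<exists>c0 C :: real. c0 > 0 \<and> C > 0
          \<and> c0 \<le> Kc * (1 + W + 1/\<gamma> + \<kappa> + \<beta> + Lb + real d) ^ k
          \<and> C \<le> Kc * (1 + W + 1/\<gamma> + \<kappa> + \<beta> + Lb + real d) ^ k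
          \<and> (\<forall>(N::nat) (n::nat) (m::nat \<Rightarrow> nat) (A::mat) (B::nat \<Rightarrow> mat) (K::nat \<Rightarrow> mat)
               (i::nat) (c::nat \<Rightarrow> vec \<Rightarrow> vec \<Rightarrow> real) (w::nat \<Rightarrow> vec)
               (P::nat \<Rightarrow> nat \<Rightarrow> nat \<Rightarrow> mat) (T::nat) (Ms::nat \<Rightarrow> mat).
               let H = Hpar \<kappa> \<gamma> N T in
               1 \<le> N \<and> i < N \<and> n \<le> d \<and> (\<forall>j<N. m j \<le> d)
               \<and> \<beta> = Max ((\<lambda>j. opnorm n (m j) (B j)) ` {..<N})
               \<and> glob_strongly_stable n m N A B K \<kappa> \<gamma>
               \<and> (\<forall>t. convex_cost (c t) \<and> lipschitz_cost n (m i) Lb (c t))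
               \<and> (\<forall>t. vnorm n (w t) \<le> W)
               \<and> H + 1 \<le> T
               \<and> (\<forall>j<N. j \<noteq> i \<longrightarrow> (\<forall>t. P j t \<in> calM n (m j) H \<kappa> \<gamma>))
               \<and> agc_run n m N A B K H \<kappa> \<gamma> (c0 / sqrt (real T)) i c w P
               \<and> Ms \<in> calM n (m i) H \<kappa> \<gamma>
               \<longrightarrow> regret_vs n m N A B K H P w i c T Ms
                     \<le> C * sqrt (real T) * (1 + ln (real N * real T)) powr ce)))"
  apply (rule exI[of _ 15], rule exI[of _ "1000 * 4^15"], rule exI[of _ 30], intro conjI)
   apply simp
  apply (intro allI impI)
  subgoal for W \<gamma> \<kappa> \<beta> Lb d
    apply (elim conjE)
    apply (rule exI[of _ 1], rule exI[of _ "1000 * 4^15 * (1 + W + 1/\<gamma> + \<kappa> + \<beta> + Lb + real d)^30"])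
    apply (intro conjI allI impI)
        apply simp
    subgoal
    proof -
      assume h: "0 \<le> W" "0 < \<gamma>" "1 \<le> \<kappa>" "0 \<le> \<beta>" "0 < Lb"
      have "0 \<le> 1/\<gamma>" "0 \<le> real d" using h by simp_all
      then have "0 < 1 + W + 1/\<gamma> + \<kappa> + \<beta> + Lb + real d" using h by linarith
      then show ?thesis by simp
    qed
    subgoal
    proof -
      assume h: "0 \<le> W" "0 < \<gamma>" "1 \<le> \<kappa>" "0 \<le> \<beta>" "0 < Lb"
      have "0 \<le> 1/\<gamma>" "0 \<le> real d" using h by simp_all
      then have "1 \<le> 1 + W + 1/\<gamma> + \<kappa> + \<beta> + Lb + real d" using h by linarith
      then have "1 \<le> (1 + W + 1/\<gamma> + \<kappa> + \<beta> + Lb + real d)^30" by simp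
      then show ?thesis by simp
    qed
     apply simp
    subgoal for N n m A B K i c w P T Ms
      unfolding Let_def
      apply (intro impI)
      apply (elim conjE)
      apply (rule final_bound[OF _ _ _ _ _ refl])
                    apply assumption+
      done
    done
  done


end
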